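(* Let $H$ be a connected false-twin-free graph with $|V(H)|\ge 7$, let $G=KB(H)$, let $q$ be a vertex of $G$ with $d_G(q)=2$, and let $B$ be the biclique of $H$ corresponding to $q$. Then one of the following holds: (1) $B$ induces $K_{1,1}$, say $B=\{v,w\}$ with $vw\in E(H)$, and there is a vertex $x$ with $N[v]=N[w]=\{v,w,x\}$ and such that $N(x)\setminus\{v,w\}$ is an independent set of $H$; (2) $B$ induces $K_{1,2}$, say with center $b$ and leaves $a,c$ (so $ab,bc\in E(H)$, $ac\notin E(H)$), and, after possibly exchanging the names of $a$ and $c$, $N(a)=\{b\}$ and $N(b)=\{a,c\}$.
   Context: All graphs are finite, simple, undirected and connected. A biclique of a graph $H$ is a maximal (with respect to vertex-set inclusion) set of vertices inducing a complete bipartite subgraph $K_{r,s}$ with $r,s\ge 1$. The biclique graph $KB(H)$ is the intersection graph of the family of all bicliques of $H$: its vertices are the bicliques of $H$, and two bicliques are adjacent iff they share at least one vertex. $N(u)$ denotes the open neighborhood of $u$ and $N[u]=N(u)\cup\{u\}$ the closed neighborhood. Two distinct vertices $u,v$ are false-twins if $N(u)=N(v)$; a graph is false-twin-free if it has no pair of false-twins. *)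

theory Defs
  imports Main
begin

definition simple_graph :: "'a set \<Rightarrow> ('a \<Rightarrow> 'a \<Rightarrow> bool) \<Rightarrow> bool" where
  "simple_graph V E \<longleftrightarrow> finite V \<and> V \<noteq> {} \<and>
     (\<forall>u v. E u v \<longrightarrow> u \<in> V \<and> v \<in> V) \<and>
     (\<forall>u v. E u v \<longrightarrow> E v u) \<and> (\<forall>u. \<not> E u u)"

definition connected_graph :: "'a set \<Rightarrow> ('a \<Rightarrow> 'a \<Rightarrow> bool) \<Rightarrow> bool" where
  "connected_graph V E \<longleftrightarrow> (\<forall>u\<in>V. \<forall>v\<in>V. E\<^sup>*\<^sup>* u v)"

definition nbhd :: "'a set \<Rightarrow> ('a \<Rightarrow> 'a \<Rightarrow> bool) \<Rightarrow> 'a \<Rightarrow> 'a set" where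
  "nbhd V E u = {w \<in> V. E u w}"

definition closed_nbhd :: "'a set \<Rightarrow> ('a \<Rightarrow> 'a \<Rightarrow> bool) \<Rightarrow> 'a \<Rightarrow> 'a set" where
  "closed_nbhd V E u = insert u (nbhd V E u)"

definition false_twin_free :: "'a set \<Rightarrow> ('a \<Rightarrow> 'a \<Rightarrow> bool) \<Rightarrow> bool" where
  "false_twin_free V E \<longleftrightarrow> (\<forall>u\<in>V. \<forall>v\<in>V. u \<noteq> v \<longrightarrow> nbhd V E u \<noteq> nbhd V E v)"

definition independent_set :: "('a \<Rightarrow> 'a \<Rightarrow> bool) \<Rightarrow> 'a set \<Rightarrow> bool" where
  "independent_set E S \<longleftrightarrow> (\<forall>x\<in>S. \<forall>y\<in>S. \<not> E x y)"

definition induces_complete_bipartite :: "('a \<Rightarrow> 'a \<Rightarrow> bool) \<Rightarrow> 'a set \<Rightarrow> bool" where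
  "induces_complete_bipartite E S \<longleftrightarrow>
     (\<exists>X Y. X \<noteq> {} \<and> Y \<noteq> {} \<and> X \<inter> Y = {} \<and> S = X \<union> Y \<and>
        independent_set E X \<and> independent_set E Y \<and> (\<forall>x\<in>X. \<forall>y\<in>Y. E x y))"

definition biclique :: "'a set \<Rightarrow> ('a \<Rightarrow> 'a \<Rightarrow> bool) \<Rightarrow> 'a set \<Rightarrow> bool" where
  "biclique V E B \<longleftrightarrow> B \<subseteq> V \<and> induces_complete_bipartite E B \<and>
     (\<forall>B'. B \<subseteq> B' \<and> B' \<subseteq> V \<and> induces_complete_bipartite E B' \<longrightarrow> B' = B)"

definition KB_vertices :: "'a set \<Rightarrow> ('a \<Rightarrow> 'a \<Rightarrow> bool) \<Rightarrow> 'a set set" where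
  "KB_vertices V E = {B. biclique V E B}"

definition KB_adj :: "'a set \<Rightarrow> ('a \<Rightarrow> 'a \<Rightarrow> bool) \<Rightarrow> 'a set \<Rightarrow> 'a set \<Rightarrow> bool" where
  "KB_adj V E B1 B2 \<longleftrightarrow> B1 \<in> KB_vertices V E \<and> B2 \<in> KB_vertices V E \<and>
     B1 \<noteq> B2 \<and> B1 \<inter> B2 \<noteq> {}"

definition KB_degree :: "'a set \<Rightarrow> ('a \<Rightarrow> 'a \<Rightarrow> bool) \<Rightarrow> 'a set \<Rightarrow> nat" where
  "KB_degree V E B = card {B'. KB_adj V E B B'}"

end

theory Submission
  imports Defs
begin


locale G =
  fixes V :: "'a set" and E :: "'a \<Rightarrow> 'a \<Rightarrow> bool"
  assumes sg: "simple_graph V E"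
    and conn: "connected_graph V E"
    and tf: "false_twin_free V E"
    and big: "card V \<ge> 7"
begin

lemma Esym: "E u v \<Longrightarrow> E v u" using sg unfolding simple_graph_def by blast
lemma Eirr: "\<not> E u u" using sg unfolding simple_graph_def by blast
lemma EV1: "E u v \<Longrightarrow> u \<in> V" using sg unfolding simple_graph_def by blast
lemma EV2: "E u v \<Longrightarrow> v \<in> V" using sg unfolding simple_graph_def by blast
lemma finV: "finite V" using sg unfolding simple_graph_def by blast
lemma Eneq: "E u v \<Longrightarrow> u \<noteq> v" using Eirr by blast

abbreviation cb where "cb S \<equiv> induces_complete_bipartite E S"
abbreviation bic where "bic S \<equiv> biclique V E S"

lemma cb_xor:
  assumes "cb C" "a \<in> C" "b \<in> C" "c \<in> C" "E a b"
  shows "E a c \<longleftrightarrow> \<not> E b c"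
proof -
  obtain X Y where XY: "C = X \<union> Y"
    "independent_set E X" "independent_set E Y" "\<forall>x\<in>X. \<forall>y\<in>Y. E x y" "X \<inter> Y = {}"
    using assms(1) unfolding induces_complete_bipartite_def by blast
  have iX: "\<And>x y. x \<in> X \<Longrightarrow> y \<in> X \<Longrightarrow> \<not> E x y" using XY(2) unfolding independent_set_def by blast
  have iY: "\<And>x y. x \<in> Y \<Longrightarrow> y \<in> Y \<Longrightarrow> \<not> E x y" using XY(3) unfolding independent_set_def by blast
  have cXY: "\<And>x y. x \<in> X \<Longrightarrow> y \<in> Y \<Longrightarrow> E x y" using XY(4) by blast
  have cYX: "\<And>x y. x \<in> Y \<Longrightarrow> y \<in> X \<Longrightarrow> E x y" using cXY Esym by blast
  have ab: "(a \<in> X \<and> b \<in> Y) \<or> (a \<in> Y \<and> b \<in> X)"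
    using assms(2,3,5) XY(1) iX iY by blast
  have c: "c \<in> X \<or> c \<in> Y" using assms(4) XY(1) by blast
  show ?thesis
  proof (cases "a \<in> X")
    case True
    then have b: "b \<in> Y" using ab XY(5) by blast
    show ?thesis
    proof (cases "c \<in> X")
      case True
      have "\<not> E a c" using iX \<open>a \<in> X\<close> True by blast
      moreover have "E b c" using cYX b True by blast
      ultimately show ?thesis by blast
    next
      case False
      then have "c \<in> Y" using c by blast
      have "E a c" using cXY \<open>a \<in> X\<close> \<open>c \<in> Y\<close> by blast
      moreover have "\<not> E b c" using iY b \<open>c \<in> Y\<close> by blast
      ultimately show ?thesis by blast
    qed
  next
    case False
    then have a: "a \<in> Y" and b: "b \<in> X" using ab XY(5) by blast+
    show ?thesis
    proof (cases "c \<in> X")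
      case True
      have "E a c" using cYX a True by blast
      moreover have "\<not> E b c" using iX b True by blast
      ultimately show ?thesis by blast
    next
      case False
      then have "c \<in> Y" using c by blast
      have "\<not> E a c" using iY a \<open>c \<in> Y\<close> by blast
      moreover have "E b c" using cXY b \<open>c \<in> Y\<close> by blast
      ultimately show ?thesis by blast
    qed
  qed
qed

lemma cb_partner:
  assumes "cb C" "a \<in> C" shows "\<exists>b\<in>C. E a b"
proof -
  obtain X Y where XY: "X \<noteq> {}" "Y \<noteq> {}" "X \<inter> Y = {}" "C = X \<union> Y"
    "independent_set E X" "independent_set E Y" "\<forall>x\<in>X. \<forall>y\<in>Y. E x y"
    using assms(1) unfolding induces_complete_bipartite_def by blast
  show ?thesis using XY assms(2) Esym by blast
qed

lemma cbI:
  assumes "X \<noteq> {}" "Y \<noteq> {}" "independent_set E X" "independent_set E Y"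
    "\<forall>x\<in>X. \<forall>y\<in>Y. E x y"
  shows "cb (X \<union> Y)"
proof -
  have "X \<inter> Y = {}" using assms(5) Eirr by blast
  thus ?thesis using assms unfolding induces_complete_bipartite_def by blast
qed

lemma star:
  assumes "E c p" "E c q" "\<not> E p q"
  shows "cb {c, p, q}"
proof -
  have "cb ({c} \<union> {p,q})"
  proof (rule cbI)
    show "independent_set E {c}" using Eirr unfolding independent_set_def by simp
    show "independent_set E {p,q}" using Eirr assms(3) Esym unfolding independent_set_def by blast
    show "\<forall>x\<in>{c}. \<forall>y\<in>{p, q}. E x y" using assms(1,2) by blast
  qed auto
  moreover have "{c} \<union> {p,q} = {c,p,q}" by auto
  ultimately show ?thesis by metis
qed

lemma edge_cb: "E a b \<Longrightarrow> cb {a, b}"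
  using star[of a b b] Eirr by simp

lemma bic_V: "bic C \<Longrightarrow> C \<subseteq> V" unfolding biclique_def by blast
lemma bic_cb: "bic C \<Longrightarrow> cb C" unfolding biclique_def by blast

lemma ext:
  assumes "cb S" "S \<subseteq> V"
  shows "\<exists>C. bic C \<and> S \<subseteq> C"
proof -
  define F where "F = {T. S \<subseteq> T \<and> T \<subseteq> V \<and> cb T}"
  have ne: "S \<in> F" using assms unfolding F_def by auto
  have bd: "\<forall>y. y \<in> F \<longrightarrow> card y < Suc (card V)"
  proof (intro allI impI)
    fix y assume "y \<in> F"
    hence "y \<subseteq> V" unfolding F_def by simp
    hence "card y \<le> card V" using card_mono[OF finV] by simp
    thus "card y < Suc (card V)" by simp
  qed
  obtain T where T: "T \<in> F" "\<And>T'. T' \<in> F \<Longrightarrow> card T' \<le> card T"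
    using ex_has_greatest_nat[of "\<lambda>T. T \<in> F" S card "Suc (card V)", OF ne bd] by blast
  have TV: "T \<subseteq> V" "cb T" "S \<subseteq> T" using T(1) unfolding F_def by auto
  have "bic T"
    unfolding biclique_def
  proof (intro conjI allI impI)
    show "T \<subseteq> V" "cb T" using TV by auto
  next
    fix B' assume h: "T \<subseteq> B' \<and> B' \<subseteq> V \<and> cb B'"
    hence "B' \<in> F" using TV unfolding F_def by auto
    hence "card B' \<le> card T" using T(2) by blast
    moreover have "finite B'" using h finV finite_subset by blast
    ultimately show "B' = T" using h card_seteq by blast
  qed
  thus ?thesis using TV by auto
qed

lemma twin:
  assumes "u \<in> V" "v \<in> V" "\<And>w. E u w \<longleftrightarrow> E v w"
  shows "u = v"
proof -
  have "nbhd V E u = nbhd V E v" unfolding nbhd_def using assms(3) by auto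
  thus ?thesis using tf assms(1,2) unfolding false_twin_free_def by blast
qed

lemma closure:
  assumes "k0 \<in> K" "\<And>k w. k \<in> K \<Longrightarrow> E k w \<Longrightarrow> w \<in> K" "k0 \<in> V"
  shows "V \<subseteq> K"
proof
  fix v assume "v \<in> V"
  hence "E\<^sup>*\<^sup>* k0 v" using conn assms(3) unfolding connected_graph_def by blast
  thus "v \<in> K"
  proof (induction rule: rtranclp_induct)
    case base then show ?case using assms(1) .
  next
    case (step y z) then show ?case using assms(2) by blast
  qed
qed

lemma closure_card:
  assumes "k0 \<in> K" "\<And>k w. k \<in> K \<Longrightarrow> E k w \<Longrightarrow> w \<in> K" "k0 \<in> V" "finite K"
  shows "card V \<le> card K"
  by (rule card_mono[OF assms(4) closure[OF assms(1-3)]])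

end



lemma ins_le: "finite A \<Longrightarrow> card (insert x A) \<le> Suc (card A)"
  by (simp add: card_insert_if)

locale S = G +
  fixes B X Y B1 B2
  assumes bB: "bic B" and BXY: "B = X \<union> Y" and Xne: "X \<noteq> {}" and Yne: "Y \<noteq> {}"
    and XYd: "X \<inter> Y = {}" and iX: "independent_set E X" and iY: "independent_set E Y"
    and cXY: "\<forall>x\<in>X. \<forall>y\<in>Y. E x y"
    and b1: "bic B1" and b2: "bic B2" and d12: "B1 \<noteq> B2" and n1: "B1 \<noteq> B" and n2: "B2 \<noteq> B"
    and m1: "B1 \<inter> B \<noteq> {}" and m2: "B2 \<inter> B \<noteq> {}"
    and only: "\<And>C. bic C \<Longrightarrow> C \<inter> B \<noteq> {} \<Longrightarrow> C = B \<or> C = B1 \<or> C = B2"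
begin

lemma swap: "S V E B Y X B1 B2"
proof -
  have "S_axioms V E B Y X B1 B2"
    unfolding S_axioms_def
  proof (intro conjI)
    show "B = Y \<union> X" using BXY by blast
    show "Y \<inter> X = {}" using XYd by blast
    show "\<forall>x\<in>Y. \<forall>y\<in>X. E x y" using cXY Esym by blast
    show "\<forall>C. bic C \<longrightarrow> C \<inter> B \<noteq> {} \<longrightarrow> C = B \<or> C = B1 \<or> C = B2" using only by blast
  qed (fact bB Xne Yne iX iY b1 b2 d12 n1 n2 m1 m2)+
  thus ?thesis using G_axioms unfolding S_def by blast
qed

lemma BV: "B \<subseteq> V" using bB bic_V by blast
lemma XV: "X \<subseteq> V" using BV BXY by blast
lemma YV: "Y \<subseteq> V" using BV BXY by blast
lemma indX: "x \<in> X \<Longrightarrow> x' \<in> X \<Longrightarrow> \<not> E x x'" using iX unfolding independent_set_def by blast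
lemma indY: "y \<in> Y \<Longrightarrow> y' \<in> Y \<Longrightarrow> \<not> E y y'" using iY unfolding independent_set_def by blast
lemma eXY: "x \<in> X \<Longrightarrow> y \<in> Y \<Longrightarrow> E x y" using cXY by blast
lemma eYX: "x \<in> X \<Longrightarrow> y \<in> Y \<Longrightarrow> E y x" using cXY Esym by blast

lemma maxB: "cb S' \<Longrightarrow> B \<subseteq> S' \<Longrightarrow> S' \<subseteq> V \<Longrightarrow> S' = B"
  using bB unfolding biclique_def by blast

lemma bic_subB: "bic C \<Longrightarrow> C \<subseteq> B \<Longrightarrow> C = B"
  using bB unfolding biclique_def by blast

lemma notside1:
  assumes "u \<in> V" "u \<notin> B" "\<forall>y\<in>Y. E u y" "\<forall>x\<in>X. \<not> E u x"
  shows False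
proof -
  have "cb ((insert u X) \<union> Y)"
  proof (rule cbI)
    show "independent_set E (insert u X)" using iX assms(4) Esym Eirr unfolding independent_set_def by blast
    show "independent_set E Y" using iY .
    show "\<forall>x\<in>insert u X. \<forall>y\<in>Y. E x y" using cXY assms(3) by blast
  qed (use Yne in auto)
  moreover have "B \<subseteq> (insert u X) \<union> Y" using BXY by blast
  moreover have "(insert u X) \<union> Y \<subseteq> V" using XV YV assms(1) by blast
  ultimately have "(insert u X) \<union> Y = B" by (rule maxB)
  thus False using assms(2) by blast
qed

lemma notside2:
  assumes "u \<in> V" "u \<notin> B" "\<forall>x\<in>X. E u x" "\<forall>y\<in>Y. \<not> E u y"
  shows False
  using S.notside1[OF swap] assms by (metis BXY Un_commute)

lemma pick:
  assumes "cb S'" "S' \<subseteq> V" "z \<in> S'" "z \<in> B" "ou \<in> S'" "ou \<notin> B"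
  shows "\<exists>C. S' \<subseteq> C \<and> (C = B1 \<or> C = B2)"
proof -
  obtain C where C: "bic C" "S' \<subseteq> C" using ext assms(1,2) by blast
  have "C \<inter> B \<noteq> {}" using C assms(3,4) by blast
  hence "C = B \<or> C = B1 \<or> C = B2" using only C(1) by blast
  moreover have "C \<noteq> B" using C assms(5,6) by blast
  ultimately show ?thesis using C by blast
qed

lemma pick2:
  assumes "bic C1" "bic C2" "C1 \<inter> B \<noteq> {}" "C2 \<inter> B \<noteq> {}" "C1 \<noteq> B" "C2 \<noteq> B" "C1 \<noteq> C2"
    and "cb S'" "S' \<subseteq> V" "z \<in> S'" "z \<in> B" "ou \<in> S'" "ou \<notin> B"
  shows "\<exists>C. S' \<subseteq> C \<and> (C = C1 \<or> C = C2)"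
proof -
  have "C1 = B1 \<or> C1 = B2" using only assms(1,3,5) by blast
  moreover have "C2 = B1 \<or> C2 = B2" using only assms(2,4,6) by blast
  ultimately have "{C1, C2} = {B1, B2}" using assms(7) d12 by blast
  thus ?thesis using pick[OF assms(8-13)] by blast
qed

lemma typeX:
  assumes "x \<in> X" "x' \<in> X" "x \<in> B1 \<longleftrightarrow> x' \<in> B1" "x \<in> B2 \<longleftrightarrow> x' \<in> B2"
  shows "x = x'"
proof -
  have key: "E b w" if ab: "a \<in> X" "b \<in> X" "a \<in> B1 \<longleftrightarrow> b \<in> B1" "a \<in> B2 \<longleftrightarrow> b \<in> B2" "E a w" for a b w
  proof (cases "w \<in> Y")
    case True then show ?thesis using eXY ab by blast
  next
    case False
    have wB: "w \<notin> B" using False BXY indX ab(1,5) by blast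
    have "cb {a, w}" using edge_cb ab(5) .
    moreover have "{a,w} \<subseteq> V" using EV1 EV2 ab(5) by blast
    ultimately obtain C where C: "{a,w} \<subseteq> C" "C = B1 \<or> C = B2"
      using pick[of "{a,w}" a w] wB ab(1) BXY by blast
    have "b \<in> C" using C ab by blast
    moreover have cbC: "cb C" using C b1 b2 bic_cb by blast
    ultimately show "E b w" using cb_xor[OF cbC, of a w b] C(1) ab(5) indX ab(1,2) Esym by blast
  qed
  show ?thesis
    by (rule twin) (use assms XV key in blast)+
qed

lemma typeY:
  assumes "y \<in> Y" "y' \<in> Y" "y \<in> B1 \<longleftrightarrow> y' \<in> B1" "y \<in> B2 \<longleftrightarrow> y' \<in> B2"
  shows "y = y'"
  using S.typeX[OF swap] assms by blast

definition NB where "NB = B \<union> {w. \<exists>z\<in>B. E z w}"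

lemma CL:
  assumes "B1 \<subseteq> NB" "B2 \<subseteq> NB"
  shows "V \<subseteq> NB"
proof -
  obtain z where z: "z \<in> B" using BXY Xne by blast
  show ?thesis
  proof (rule closure)
    show "z \<in> NB" using z unfolding NB_def by blast
    show "z \<in> V" using z BV by blast
  next
    fix k w assume k: "k \<in> NB" and kw: "E k w"
    show "w \<in> NB"
    proof (rule ccontr)
      assume wn: "w \<notin> NB"
      have kB: "k \<notin> B" using wn kw unfolding NB_def by blast
      then obtain z' where z': "z' \<in> B" "E z' k" using k unfolding NB_def by blast
      have nzw: "\<not> E z' w" using wn z' unfolding NB_def by blast
      have wB: "w \<notin> B" using wn unfolding NB_def by blast
      have "cb {k, z', w}" using star[of k z' w] z'(2) kw nzw Esym by blast
      moreover have "{k, z', w} \<subseteq> V" using EV1 EV2 kw z'(2) by blast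
      ultimately obtain C where "{k, z', w} \<subseteq> C" "C = B1 \<or> C = B2"
        using pick[of "{k,z',w}" z' w] z' wB by blast
      thus False using assms wn by blast
    qed
  qed
qed

end



context S
begin

lemma caseA:
  assumes X: "X = {v}" and Y: "Y = {w}"
  shows "\<exists>v w x. B = {v, w} \<and> v \<noteq> w \<and> E v w \<and> x \<in> V \<and> x \<noteq> v \<and> x \<noteq> w \<and>
            closed_nbhd V E v = {v, w, x} \<and> closed_nbhd V E w = {v, w, x} \<and>
            independent_set E (nbhd V E x - {v, w})"
proof -
  have vw: "E v w" using cXY X Y by auto
  have B: "B = {v,w}" using BXY X Y by auto
  have vV: "v \<in> V" "w \<in> V" using EV1 EV2 vw by blast+
  have M: "E v u \<longleftrightarrow> E w u" if u: "u \<notin> B" for u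
  proof
    assume h: "E v u"
    show "E w u"
    proof (rule ccontr)
      assume "\<not> E w u"
      then have "\<not> E u w" using Esym by blast
      then show False using notside2[of u] u Esym[OF h] EV2[OF h] X Y by blast
    qed
  next
    assume h: "E w u"
    show "E v u"
    proof (rule ccontr)
      assume "\<not> E v u"
      then have "\<not> E u v" using Esym by blast
      then show False using notside1[of u] u Esym[OF h] EV2[OF h] X Y by blast
    qed
  qed
  have "\<exists>m. E v m \<and> m \<noteq> w"
  proof (rule ccontr)
    assume none: "\<not> (\<exists>m. E v m \<and> m \<noteq> w)"
    have "card V \<le> card {v,w}"
    proof (rule closure_card)
      show "v \<in> {v,w}" "v \<in> V" "finite {v,w}" using vV by auto
    next
      fix k x' assume k: "k \<in> {v,w}" and kx: "E k x'"
      show "x' \<in> {v,w}"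
      proof (cases "k = v")
        case True then show ?thesis using none kx by blast
      next
        case False
        then have "k = w" using k by blast
        show ?thesis
        proof (rule ccontr)
          assume "x' \<notin> {v,w}"
          then have "x' \<notin> B" using B by blast
          then have "E v x'" using M kx \<open>k = w\<close> by blast
          then show False using none \<open>x' \<notin> {v,w}\<close> by blast
        qed
      qed
    qed
    also have "\<dots> \<le> 2" by (simp add: card_insert_if)
    finally show False using big by simp
  qed
  then obtain m where m: "E v m" "m \<noteq> w" by blast
  have mB: "m \<notin> B" using m B Eneq by blast
  have wm: "E w m" using M mB m by blast
  obtain Cv where Cv: "bic Cv" "{v,m} \<subseteq> Cv"
    using ext[OF edge_cb[OF m(1)]] EV1 EV2 m(1) by blast
  obtain Cw where Cw: "bic Cw" "{w,m} \<subseteq> Cw"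
    using ext[OF edge_cb[OF wm]] EV1 EV2 wm by blast
  have cbv: "cb Cv" using Cv bic_cb by blast
  have cbw: "cb Cw" using Cw bic_cb by blast
  have wCv: "w \<notin> Cv"
  proof
    assume "w \<in> Cv"
    then show False using cb_xor[OF cbv, of v m w] Cv vw Esym[OF wm] m(1) by blast
  qed
  have vCw: "v \<notin> Cw"
  proof
    assume "v \<in> Cw"
    then show False using cb_xor[OF cbw, of w m v] Cw Esym[OF vw] Esym[OF m(1)] wm by blast
  qed
  have P2: "\<exists>C. S' \<subseteq> C \<and> (C = Cv \<or> C = Cw)"
    if "cb S'" "S' \<subseteq> V" "z \<in> S'" "z \<in> B" "ou \<in> S'" "ou \<notin> B" for S' z ou
  proof (rule pick2[OF Cv(1) Cw(1) _ _ _ _ _ that])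
    show "Cv \<inter> B \<noteq> {}" using Cv B by blast
    show "Cw \<inter> B \<noteq> {}" using Cw B by blast
    show "Cv \<noteq> B" using Cv mB by blast
    show "Cw \<noteq> B" using Cw mB by blast
    show "Cv \<noteq> Cw" using Cv vCw by blast
  qed
  have inCv: "p \<in> Cv" if hh: "E v p" "p \<noteq> w" for p
  proof -
    have pB: "p \<notin> B" using hh B Eneq by blast
    have sub: "{v,p} \<subseteq> V" using EV1[OF hh(1)] EV2[OF hh(1)] by blast
    have vB: "v \<in> B" using B by blast
    obtain C where C: "{v,p} \<subseteq> C" "C = Cv \<or> C = Cw"
      using P2[OF edge_cb[OF hh(1)] sub, of v p] vB pB by blast
    then show ?thesis using vCw by blast
  qed
  have key: "E m2 p" if h: "E v m1" "m1 \<noteq> w" "E v m2" "m2 \<noteq> w" "E m1 p" for m1 m2 p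
  proof (rule ccontr)
    assume np: "\<not> E m2 p"
    have m2B: "m2 \<notin> B" using h B Eneq by blast
    have "E w m2" using M m2B h by blast
    then have pvw: "p \<noteq> v" "p \<noteq> w" using np Esym[OF h(3)] Esym[OF \<open>E w m2\<close>] by blast+
    have pB: "p \<notin> B" using pvw B by blast
    have nvp: "\<not> E v p"
    proof
      assume "E v p"
      then have "p \<in> Cv" using inCv pvw by blast
      moreover have "m1 \<in> Cv" using inCv h by blast
      ultimately show False using cb_xor[OF cbv, of v m1 p] Cv h \<open>E v p\<close> by blast
    qed
    have "cb {m1, v, p}" using star[of m1 v p] h Esym[OF h(1)] nvp by blast
    moreover have "{m1, v, p} \<subseteq> V" using EV1[OF h(1)] EV2[OF h(1)] EV2[OF h(5)] by blast
    moreover have vB: "v \<in> B" using B by blast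
    ultimately obtain C where C: "{m1,v,p} \<subseteq> C" "C = Cv \<or> C = Cw"
      using P2[of "{m1,v,p}" v p] pB by blast
    then have "p \<in> Cv" using vCw by blast
    moreover have "m2 \<in> Cv" using inCv h by blast
    ultimately show False using cb_xor[OF cbv, of v m2 p] Cv h nvp np by blast
  qed
  have uniq: "p = m" if "E v p" "p \<noteq> w" for p
  proof (rule twin)
    show "p \<in> V" "m \<in> V" using EV2 that m by blast+
    fix z show "E p z \<longleftrightarrow> E m z" using key[of p m z] key[of m p z] that m by blast
  qed
  have Nv: "E v z \<longleftrightarrow> z = w \<or> z = m" for z using uniq vw m by blast
  have Nw: "E w z \<longleftrightarrow> z = v \<or> z = m" for z
  proof
    assume h: "E w z"
    show "z = v \<or> z = m"
    proof (cases "z \<in> B")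
      case True then show ?thesis using B Eirr h by blast
    next
      case False then have "E v z" using M h by blast
      then show ?thesis using Nv False B by blast
    qed
  next
    assume "z = v \<or> z = m" then show "E w z" using Esym[OF vw] wm by blast
  qed
  have mV: "m \<in> V" using EV2 m by blast
  show ?thesis
  proof (intro exI conjI)
    show "B = {v,w}" by (rule B)
    show "v \<noteq> w" "E v w" using vw Eneq by blast+
    show "m \<in> V" by (rule mV)
    show "m \<noteq> v" "m \<noteq> w" using m Eneq by blast+
    show "closed_nbhd V E v = {v, w, m}"
      unfolding closed_nbhd_def nbhd_def using Nv vV mV by auto
    show "closed_nbhd V E w = {v, w, m}"
      unfolding closed_nbhd_def nbhd_def using Nw vV mV by auto
    show "independent_set E (nbhd V E m - {v, w})"
      unfolding independent_set_def
    proof (intro ballI notI)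
      fix p q assume p: "p \<in> nbhd V E m - {v, w}" and q: "q \<in> nbhd V E m - {v, w}" and pq: "E p q"
      have mp: "E m p" "E m q" "p \<noteq> v" "p \<noteq> w" "q \<noteq> v" "q \<noteq> w" using p q unfolding nbhd_def by auto
      have inC: "r \<in> Cv" if r: "E m r" "r \<noteq> v" "r \<noteq> w" for r
      proof -
        have "\<not> E v r" using Nv r Eneq by blast
        then have "cb {m, v, r}" using star[of m v r] r Esym[OF m(1)] by blast
        moreover have "{m, v, r} \<subseteq> V" using EV1[OF r(1)] EV2[OF r(1)] vV by blast
        moreover have "r \<notin> B" using r B by blast
        moreover have vB: "v \<in> B" using B by blast
        ultimately obtain C where C: "{m,v,r} \<subseteq> C" "C = Cv \<or> C = Cw"
          using P2[of "{m,v,r}" v r] by blast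
        then show ?thesis using vCw by blast
      qed
      have "p \<in> Cv" "q \<in> Cv" using inC mp by blast+
      then show False using cb_xor[OF cbv, of m p q] Cv mp pq by blast
    qed
  qed
qed

end



context S
begin

lemma ident:
  assumes "bic C1" "bic C2" "C1 \<inter> B \<noteq> {}" "C2 \<inter> B \<noteq> {}" "C1 \<noteq> B" "C2 \<noteq> B" "C1 \<noteq> C2"
  shows "(B1 = C1 \<and> B2 = C2) \<or> (B1 = C2 \<and> B2 = C1)"
proof -
  have "C1 = B1 \<or> C1 = B2" using only assms(1,3,5) by blast
  moreover have "C2 = B1 \<or> C2 = B2" using only assms(2,4,6) by blast
  ultimately show ?thesis using assms(7) d12 by blast
qed

lemma typeX2:
  assumes "bic C1" "bic C2" "C1 \<inter> B \<noteq> {}" "C2 \<inter> B \<noteq> {}" "C1 \<noteq> B" "C2 \<noteq> B" "C1 \<noteq> C2"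
    and "x \<in> X" "x' \<in> X" "x \<in> C1 \<longleftrightarrow> x' \<in> C1" "x \<in> C2 \<longleftrightarrow> x' \<in> C2"
  shows "x = x'"
proof -
  have "(B1 = C1 \<and> B2 = C2) \<or> (B1 = C2 \<and> B2 = C1)" by (rule ident[OF assms(1-7)])
  then have "(x \<in> B1 \<longleftrightarrow> x' \<in> B1) \<and> (x \<in> B2 \<longleftrightarrow> x' \<in> B2)" using assms(10,11) by blast
  then show ?thesis using typeX assms(8,9) by blast
qed

lemma typeY2:
  assumes "bic C1" "bic C2" "C1 \<inter> B \<noteq> {}" "C2 \<inter> B \<noteq> {}" "C1 \<noteq> B" "C2 \<noteq> B" "C1 \<noteq> C2"
    and "x \<in> Y" "x' \<in> Y" "x \<in> C1 \<longleftrightarrow> x' \<in> C1" "x \<in> C2 \<longleftrightarrow> x' \<in> C2"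
  shows "x = x'"
  using S.typeX2[OF swap] assms BXY by (metis sup_commute)

lemma CL2:
  assumes "bic C1" "bic C2" "C1 \<inter> B \<noteq> {}" "C2 \<inter> B \<noteq> {}" "C1 \<noteq> B" "C2 \<noteq> B" "C1 \<noteq> C2"
    and "C1 \<subseteq> NB" "C2 \<subseteq> NB"
  shows "V \<subseteq> NB"
proof -
  have "(B1 = C1 \<and> B2 = C2) \<or> (B1 = C2 \<and> B2 = C1)" by (rule ident[OF assms(1-7)])
  then have "B1 \<subseteq> NB" "B2 \<subseteq> NB" using assms(8,9) by blast+
  then show ?thesis by (rule CL)
qed

lemma NB_cases: "z \<in> NB \<Longrightarrow> z \<notin> B \<Longrightarrow> \<exists>b\<in>B. E b z"
  unfolding NB_def by blast

lemma NB_I: "b \<in> B \<Longrightarrow> E b z \<Longrightarrow> z \<in> NB"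
  unfolding NB_def by blast

lemma NB_B: "b \<in> B \<Longrightarrow> b \<in> NB"
  unfolding NB_def by blast

lemma caseC1:
  assumes x1: "x1 \<in> X" "x2 \<in> X" "x1 \<noteq> x2" and y1: "y1 \<in> Y" "y2 \<in> Y" "y1 \<noteq> y2"
    and u: "u \<in> V" "u \<notin> B" "x \<in> X" "y \<in> Y" "E u x" "E u y"
  shows False
proof -
  have xu: "E x u" "E y u" using u Esym by blast+
  have xy: "E x y" using eXY u by blast
  have yx: "E y x" using eYX u by blast
  have xB: "x \<in> B" "y \<in> B" using u BXY by blast+
  obtain Cx where Cx: "bic Cx" "{x,u} \<subseteq> Cx"
    using ext[OF edge_cb[OF xu(1)]] EV1[OF xu(1)] u(1) by blast
  obtain Cy where Cy: "bic Cy" "{y,u} \<subseteq> Cy"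
    using ext[OF edge_cb[OF xu(2)]] EV1[OF xu(2)] u(1) by blast
  have cbx: "cb Cx" using Cx bic_cb by blast
  have cby: "cb Cy" using Cy bic_cb by blast
  have xCx: "x \<in> Cx" "u \<in> Cx" using Cx by blast+
  have yCy: "y \<in> Cy" "u \<in> Cy" using Cy by blast+
  have yCx: "y \<notin> Cx"
  proof
    assume "y \<in> Cx" then show False using cb_xor[OF cbx xCx(1) xCx(2) _ xu(1), of y] xy u(6) by blast
  qed
  have xCy: "x \<notin> Cy"
  proof
    assume "x \<in> Cy" then show False using cb_xor[OF cby yCy(1) yCy(2) _ xu(2), of x] yx u(5) by blast
  qed
  have h1: "Cx \<inter> B \<noteq> {}" "Cy \<inter> B \<noteq> {}" using xCx yCy xB by blast+
  have h2: "Cx \<noteq> B" "Cy \<noteq> B" using xCx yCy u(2) by blast+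
  have h3: "Cx \<noteq> Cy" using xCx xCy by blast
  note P2 = pick2[OF Cx(1) Cy(1) h1 h2 h3]
  note tX = typeX2[OF Cx(1) Cy(1) h1 h2 h3]
  note tY = typeY2[OF Cx(1) Cy(1) h1 h2 h3]
  have Xa: "x' \<in> Cx \<and> x' \<notin> Cy" if hh: "x' \<in> X" "E x' u" for x'
  proof
    have yx': "E y x'" using eYX hh(1) u(4) by blast
    have ux': "E u x'" using Esym hh(2) by blast
    show "x' \<notin> Cy"
    proof
      assume "x' \<in> Cy" then show False using cb_xor[OF cby yCy(1) yCy(2) _ xu(2), of x'] yx' ux' by blast
    qed
    have sub: "{x',u} \<subseteq> V" using u(1) XV hh(1) by blast
    have "x' \<in> B" using hh(1) BXY by blast
    then obtain C where "{x',u} \<subseteq> C" "C = Cx \<or> C = Cy"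
      using P2[OF edge_cb[OF hh(2)] sub, of x' u] u(2) by blast
    then show "x' \<in> Cx" using \<open>x' \<notin> Cy\<close> by blast
  qed
  have Xb: "x' \<notin> Cx \<and> x' \<in> Cy" if hh: "x' \<in> X" "\<not> E x' u" for x'
  proof
    have nux: "\<not> E u x'" using Esym hh(2) by blast
    have nxx: "\<not> E x x'" using indX u(3) hh(1) by blast
    show "x' \<notin> Cx"
    proof
      assume "x' \<in> Cx" then show False using cb_xor[OF cbx xCx(1) xCx(2) _ xu(1), of x'] nxx nux by blast
    qed
    have yx': "E y x'" using eYX hh(1) u(4) by blast
    have "cb {y, u, x'}" using star[OF xu(2) yx' nux] .
    moreover have "{y,u,x'} \<subseteq> V" using u(1) XV YV hh(1) u(4) by blast
    ultimately obtain C where "{y,u,x'} \<subseteq> C" "C = Cx \<or> C = Cy"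
      using P2[of "{y,u,x'}" y u] xB u(2) by blast
    then show "x' \<in> Cy" using yCx by blast
  qed
  have Ya: "y' \<in> Cy \<and> y' \<notin> Cx" if hh: "y' \<in> Y" "E y' u" for y'
  proof
    have xy': "E x y'" using eXY hh(1) u(3) by blast
    have uy': "E u y'" using Esym hh(2) by blast
    show "y' \<notin> Cx"
    proof
      assume "y' \<in> Cx" then show False using cb_xor[OF cbx xCx(1) xCx(2) _ xu(1), of y'] xy' uy' by blast
    qed
    have sub: "{y',u} \<subseteq> V" using u(1) YV hh(1) by blast
    have "y' \<in> B" using hh(1) BXY by blast
    then obtain C where "{y',u} \<subseteq> C" "C = Cx \<or> C = Cy"
      using P2[OF edge_cb[OF hh(2)] sub, of y' u] u(2) by blast
    then show "y' \<in> Cy" using \<open>y' \<notin> Cx\<close> by blast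
  qed
  have Yb: "y' \<notin> Cy \<and> y' \<in> Cx" if hh: "y' \<in> Y" "\<not> E y' u" for y'
  proof
    have nuy: "\<not> E u y'" using Esym hh(2) by blast
    have nyy: "\<not> E y y'" using indY u(4) hh(1) by blast
    show "y' \<notin> Cy"
    proof
      assume "y' \<in> Cy" then show False using cb_xor[OF cby yCy(1) yCy(2) _ xu(2), of y'] nyy nuy by blast
    qed
    have xy': "E x y'" using eXY hh(1) u(3) by blast
    have "cb {x, u, y'}" using star[OF xu(1) xy' nuy] .
    moreover have "{x,u,y'} \<subseteq> V" using u(1) XV YV hh(1) u(3) by blast
    ultimately obtain C where "{x,u,y'} \<subseteq> C" "C = Cx \<or> C = Cy"
      using P2[of "{x,u,y'}" x u] xB u(2) by blast
    then show "y' \<in> Cx" using xCy by blast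
  qed
  obtain x0 where x0: "x0 \<in> X" "x0 \<noteq> x" using x1 by blast
  obtain y0 where y0: "y0 \<in> Y" "y0 \<noteq> y" using y1 by blast
  have nx0: "\<not> E x0 u"
  proof
    assume h: "E x0 u"
    have "x0 = x" using tX[OF x0(1) u(3)] Xa[OF x0(1) h] Xa[OF u(3) u(5)[THEN Esym]] by blast
    then show False using x0 by blast
  qed
  have ny0: "\<not> E y0 u"
  proof
    assume h: "E y0 u"
    have "y0 = y" using tY[OF y0(1) u(4)] Ya[OF y0(1) h] Ya[OF u(4) u(6)[THEN Esym]] by blast
    then show False using y0 by blast
  qed
  have Xeq: "X = {x, x0}"
  proof
    show "X \<subseteq> {x, x0}"
    proof
      fix x' assume x': "x' \<in> X"
      show "x' \<in> {x, x0}"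
      proof (cases "E x' u")
        case True
        then have "x' = x" using tX[OF x' u(3)] Xa[OF x' True] Xa[OF u(3) u(5)[THEN Esym]] by blast
        then show ?thesis by blast
      next
        case False
        then have "x' = x0" using tX[OF x' x0(1)] Xb[OF x' False] Xb[OF x0(1) nx0] by blast
        then show ?thesis by blast
      qed
    qed
    show "{x, x0} \<subseteq> X" using x0 u by blast
  qed
  have Yeq: "Y = {y, y0}"
  proof
    show "Y \<subseteq> {y, y0}"
    proof
      fix y' assume y': "y' \<in> Y"
      show "y' \<in> {y, y0}"
      proof (cases "E y' u")
        case True
        then have "y' = y" using tY[OF y' u(4)] Ya[OF y' True] Ya[OF u(4) u(6)[THEN Esym]] by blast
        then show ?thesis by blast
      next
        case False
        then have "y' = y0" using tY[OF y' y0(1)] Yb[OF y' False] Yb[OF y0(1) ny0] by blast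
        then show ?thesis by blast
      qed
    qed
    show "{y, y0} \<subseteq> Y" using y0 u by blast
  qed
  have Beq: "B = {x, x0, y, y0}" using BXY Xeq Yeq by blast
  have mx0: "x0 \<in> Cy" "x0 \<notin> Cx" using Xb[OF x0(1) nx0] by blast+
  have my0: "y0 \<in> Cx" "y0 \<notin> Cy" using Yb[OF y0(1) ny0] by blast+
  have xy0: "E x y0" using eXY u(3) y0(1) by blast
  have x0y: "E x0 y" using eXY x0(1) u(4) by blast
  have x0y0: "E x0 y0" using eXY x0(1) y0(1) by blast
  have y0x0: "E y0 x0" using eYX x0(1) y0(1) by blast
  have nxx0: "\<not> E x x0" "\<not> E x0 x" using indX x0(1) u(3) by blast+
  have nyy0: "\<not> E y y0" "\<not> E y0 y" using indY y0(1) u(4) by blast+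
  have Cx_NB: "Cx \<subseteq> NB"
  proof
    fix c assume c: "c \<in> Cx"
    have "E x c \<or> E y0 c" using cb_xor[OF cbx xCx(1) my0(1) c xy0] by blast
    then show "c \<in> NB" using NB_I xB(1) y0(1) BXY by blast
  qed
  have Cy_NB: "Cy \<subseteq> NB"
  proof
    fix c assume c: "c \<in> Cy"
    have "E x0 c \<or> E y c" using cb_xor[OF cby mx0(1) yCy(1) c x0y] by blast
    then show "c \<in> NB" using NB_I xB(2) x0(1) BXY by blast
  qed
  have VNB: "V \<subseteq> NB" by (rule CL2[OF Cx(1) Cy(1) h1 h2 h3 Cx_NB Cy_NB])
  define T where "T w \<longleftrightarrow> w \<in> V \<and> w \<notin> B \<and> E x w \<and> E y w \<and> \<not> E x0 w \<and> \<not> E y0 w \<and> \<not> E u w \<and> w \<in> Cx \<and> w \<in> Cy" for w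
  define SS where "SS w \<longleftrightarrow> w \<in> V \<and> w \<notin> B \<and> E x0 w \<and> E y0 w \<and> \<not> E x w \<and> \<not> E y w \<and> E u w \<and> w \<in> Cx \<and> w \<in> Cy" for w
  have tx: "T w" if w: "w \<in> V" "w \<notin> B" "E x w" for w
  proof -
    have sub: "{x,w} \<subseteq> V" using w XV u(3) by blast
    obtain C where C: "{x,w} \<subseteq> C" "C = Cx \<or> C = Cy"
      using P2[OF edge_cb[OF w(3)] sub, of x w] xB w(2) by blast
    then have wCx: "w \<in> Cx" using xCy by blast
    have a1: "\<not> E u w" using cb_xor[OF cbx xCx(1) wCx xCx(2) w(3)] xu(1) Esym by blast
    have a2: "\<not> E y0 w" using cb_xor[OF cbx xCx(1) wCx my0(1) w(3)] xy0 Esym by blast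
    have a3: "E y w"
    proof (rule ccontr)
      assume nyw: "\<not> E y w"
      have "cb {x, y, w}" using star[OF xy w(3)] nyw by blast
      moreover have "{x,y,w} \<subseteq> V" using sub YV u(4) by blast
      ultimately obtain C where "{x,y,w} \<subseteq> C" "C = Cx \<or> C = Cy"
        using P2[of "{x,y,w}" x w] xB w(2) by blast
      then show False using xCy yCx by blast
    qed
    have sub2: "{y,w} \<subseteq> V" using w YV u(4) by blast
    obtain C' where C': "{y,w} \<subseteq> C'" "C' = Cx \<or> C' = Cy"
      using P2[OF edge_cb[OF a3] sub2, of y w] xB w(2) by blast
    then have wCy: "w \<in> Cy" using yCx by blast
    have a4: "\<not> E x0 w" using cb_xor[OF cby yCy(1) wCy mx0(1) a3] Esym[OF x0y] Esym by blast
    show ?thesis unfolding T_def using w a1 a2 a3 a4 wCx wCy by blast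
  qed
  have ty: "T w" if w: "w \<in> V" "w \<notin> B" "E y w" for w
  proof -
    have sub: "{y,w} \<subseteq> V" using w YV u(4) by blast
    obtain C where C: "{y,w} \<subseteq> C" "C = Cx \<or> C = Cy"
      using P2[OF edge_cb[OF w(3)] sub, of y w] xB w(2) by blast
    then have wCy: "w \<in> Cy" using yCx by blast
    have "E x w"
    proof (rule ccontr)
      assume nxw: "\<not> E x w"
      have "cb {y, x, w}" using star[OF yx w(3)] nxw by blast
      moreover have "{y,x,w} \<subseteq> V" using sub XV u(3) by blast
      ultimately obtain C where "{y,x,w} \<subseteq> C" "C = Cx \<or> C = Cy"
        using P2[of "{y,x,w}" y w] xB w(2) by blast
      then show False using xCy yCx by blast
    qed
    then show ?thesis using tx w by blast
  qed
  have sx: "SS w" if w: "w \<in> V" "w \<notin> B" "E x0 w" for w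
  proof -
    have x0B: "x0 \<in> B" using x0 BXY by blast
    have sub: "{x0,w} \<subseteq> V" using w XV x0(1) by blast
    obtain C where C: "{x0,w} \<subseteq> C" "C = Cx \<or> C = Cy"
      using P2[OF edge_cb[OF w(3)] sub, of x0 w] x0B w(2) by blast
    then have wCy: "w \<in> Cy" using mx0 by blast
    have a1: "E u w" using cb_xor[OF cby mx0(1) wCy yCy(2) w(3)] nx0 Esym by blast
    have a2: "\<not> E y w" using cb_xor[OF cby mx0(1) wCy yCy(1) w(3)] x0y Esym by blast
    have a3: "E y0 w"
    proof (rule ccontr)
      assume nyw: "\<not> E y0 w"
      have "cb {x0, y0, w}" using star[OF x0y0 w(3)] nyw by blast
      moreover have "{x0,y0,w} \<subseteq> V" using sub YV y0(1) by blast
      ultimately obtain C where "{x0,y0,w} \<subseteq> C" "C = Cx \<or> C = Cy"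
        using P2[of "{x0,y0,w}" x0 w] x0B w(2) by blast
      then show False using mx0 my0 by blast
    qed
    have y0B: "y0 \<in> B" using y0 BXY by blast
    have sub2: "{y0,w} \<subseteq> V" using w YV y0(1) by blast
    obtain C' where C': "{y0,w} \<subseteq> C'" "C' = Cx \<or> C' = Cy"
      using P2[OF edge_cb[OF a3] sub2, of y0 w] y0B w(2) by blast
    then have wCx: "w \<in> Cx" using my0 by blast
    have a4: "\<not> E x w" using cb_xor[OF cbx my0(1) wCx xCx(1) a3] Esym[OF xy0] Esym by blast
    show ?thesis unfolding SS_def using w a1 a2 a3 a4 wCx wCy by blast
  qed
  have sy: "SS w" if w: "w \<in> V" "w \<notin> B" "E y0 w" for w
  proof -
    have y0B: "y0 \<in> B" using y0 BXY by blast
    have "E x0 w"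
    proof (rule ccontr)
      assume nxw: "\<not> E x0 w"
      have "cb {y0, x0, w}" using star[OF y0x0 w(3)] nxw by blast
      moreover have "{y0,x0,w} \<subseteq> V" using w XV YV x0(1) y0(1) by blast
      ultimately obtain C where "{y0,x0,w} \<subseteq> C" "C = Cx \<or> C = Cy"
        using P2[of "{y0,x0,w}" y0 w] y0B w(2) by blast
      then show False using mx0 my0 by blast
    qed
    then show ?thesis using sx w by blast
  qed
  have classify: "T w \<or> SS w" if w: "w \<in> V" "w \<notin> B" for w
  proof -
    obtain b where b: "b \<in> B" "E b w" using NB_cases[of w] VNB w by blast
    then have "b = x \<or> b = x0 \<or> b = y \<or> b = y0" using Beq by blast
    then show ?thesis using tx ty sx sy w b by blast
  qed
  have Tu: "T u"
    unfolding T_def using u xu nx0 ny0 Esym Eirr xCx yCy by blast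
  have ST: "E s t" if "SS s" "T t" for s t
  proof -
    have "E t s" using cb_xor[of Cx x t s] cbx xCx(1) that unfolding SS_def T_def by blast
    then show ?thesis using Esym by blast
  qed
  have SS2: "\<not> E s s'" if "SS s" "SS s'" for s s'
    using cb_xor[of Cx y0 s s'] cbx my0(1) that unfolding SS_def by blast
  have TT2: "\<not> E t t'" if "T t" "T t'" for t t'
    using cb_xor[of Cx x t t'] cbx xCx(1) that unfolding T_def by blast
  have Tuniq: "t = u" if "T t" for t
  proof (rule twin)
    show "t \<in> V" "u \<in> V" using that u unfolding T_def by blast+
    fix z show "E t z \<longleftrightarrow> E u z"
    proof (cases "z \<in> V")
      case False then show ?thesis using EV2 by blast
    next
      case True
      show ?thesis
      proof (cases "z \<in> B")
        case True
        then have "z = x \<or> z = x0 \<or> z = y \<or> z = y0" using Beq by blast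
        then show ?thesis using that Tu Esym unfolding T_def by blast
      next
        case False
        then have "T z \<or> SS z" using classify \<open>z \<in> V\<close> by blast
        then show ?thesis using ST TT2 that Tu Esym by blast
      qed
    qed
  qed
  have Suniq: "s = s'" if "SS s" "SS s'" for s s'
  proof (rule twin)
    show "s \<in> V" "s' \<in> V" using that unfolding SS_def by blast+
    fix z show "E s z \<longleftrightarrow> E s' z"
    proof (cases "z \<in> V")
      case False then show ?thesis using EV2 by blast
    next
      case True
      show ?thesis
      proof (cases "z \<in> B")
        case True
        then have "z = x \<or> z = x0 \<or> z = y \<or> z = y0" using Beq by blast
        then show ?thesis using that Esym unfolding SS_def by blast
      next
        case False
        then have "T z \<or> SS z" using classify \<open>z \<in> V\<close> by blast
        then show ?thesis using ST SS2 that Esym by blast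
      qed
    qed
  qed
  have finS: "finite {w. SS w}" using finV unfolding SS_def by simp
  have cS: "card {w. SS w} \<le> 1" using Suniq finS by (simp add: card_le_Suc0_iff_eq)
  have "V \<subseteq> {x, x0, y, y0, u} \<union> {w. SS w}"
  proof
    fix z assume z: "z \<in> V"
    show "z \<in> {x, x0, y, y0, u} \<union> {w. SS w}"
    proof (cases "z \<in> B")
      case True then show ?thesis using Beq by blast
    next
      case False
      then show ?thesis using classify[OF z False] Tuniq by blast
    qed
  qed
  then have "card V \<le> card ({x, x0, y, y0, u} \<union> {w. SS w})"
    using finS by (intro card_mono) auto
  also have "\<dots> \<le> card {x, x0, y, y0, u} + card {w. SS w}" by (rule card_Un_le)
  also have "card {x, x0, y, y0, u} \<le> 5" by (simp add: card_insert_if)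
  finally show False using cS big by linarith
qed

end



context S
begin

lemma caseC2:
  assumes x1: "x1 \<in> X" "x2 \<in> X" "x1 \<noteq> x2" and y1: "y1 \<in> Y" "y2 \<in> Y" "y1 \<noteq> y2"
    and noT: "\<And>u x y. u \<notin> B \<Longrightarrow> x \<in> X \<Longrightarrow> y \<in> Y \<Longrightarrow> E u x \<Longrightarrow> E u y \<Longrightarrow> False"
  shows False
proof -
  have "\<exists>x u. x \<in> X \<and> u \<in> V \<and> u \<notin> B \<and> E x u"
  proof (rule ccontr)
    assume h: "\<not> ?thesis"
    have "x1 = x2"
    proof (rule twin)
      show "x1 \<in> V" "x2 \<in> V" using x1 XV by blast+
      fix w show "E x1 w \<longleftrightarrow> E x2 w"
      proof (cases "w \<in> B")
        case True
        then have "w \<in> X \<or> w \<in> Y" using BXY by blast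
        then show ?thesis using indX eXY x1 by blast
      next
        case False then show ?thesis using h x1 EV2 by blast
      qed
    qed
    then show False using x1 by blast
  qed
  then obtain x u where xu: "x \<in> X" "u \<in> V" "u \<notin> B" "E x u" by blast
  have "\<exists>y v. y \<in> Y \<and> v \<in> V \<and> v \<notin> B \<and> E y v"
  proof (rule ccontr)
    assume h: "\<not> ?thesis"
    have "y1 = y2"
    proof (rule twin)
      show "y1 \<in> V" "y2 \<in> V" using y1 YV by blast+
      fix w show "E y1 w \<longleftrightarrow> E y2 w"
      proof (cases "w \<in> B")
        case True
        then have "w \<in> X \<or> w \<in> Y" using BXY by blast
        then show ?thesis using indY eYX y1 by blast
      next
        case False then show ?thesis using h y1 EV2 by blast
      qed
    qed
    then show False using y1 by blast
  qed
  then obtain y v where yv: "y \<in> Y" "v \<in> V" "v \<notin> B" "E y v" by blast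
  have xB: "x \<in> B" "y \<in> B" using xu yv BXY by blast+
  have nY: "\<not> E w y'" if "w \<notin> B" "x' \<in> X" "E x' w" "y' \<in> Y" for w x' y'
    using noT[of w x' y'] that Esym by blast
  have nX: "\<not> E w x'" if "w \<notin> B" "y' \<in> Y" "E y' w" "x' \<in> X" for w x' y'
    using noT[of w x' y'] that Esym by blast
  have cbX: "cb ({x'} \<union> (insert w Y))" if w: "w \<notin> B" "x' \<in> X" "E x' w" for w x'
  proof (rule cbI)
    show "independent_set E (insert w Y)" unfolding independent_set_def
      using indY nY[OF w] Esym Eirr by blast
    show "independent_set E {x'}" unfolding independent_set_def using Eirr by blast
    show "\<forall>a\<in>{x'}. \<forall>b\<in>insert w Y. E a b" using eXY w by blast
  qed auto
  have cbY: "cb ({y'} \<union> (insert w X))" if w: "w \<notin> B" "y' \<in> Y" "E y' w" for w y'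
  proof (rule cbI)
    show "independent_set E (insert w X)" unfolding independent_set_def
      using indX nX[OF w] Esym Eirr by blast
    show "independent_set E {y'}" unfolding independent_set_def using Eirr by blast
    show "\<forall>a\<in>{y'}. \<forall>b\<in>insert w X. E a b" using eYX w by blast
  qed auto
  have subX: "{x'} \<union> (insert w Y) \<subseteq> V" if "x' \<in> X" "E x' w" for x' w
    using that XV YV EV2 by blast
  have subY: "{y'} \<union> (insert w X) \<subseteq> V" if "y' \<in> Y" "E y' w" for y' w
    using that XV YV EV2 by blast
  obtain Cu where Cu: "bic Cu" "{x} \<union> (insert u Y) \<subseteq> Cu"
    using ext[OF cbX[OF xu(3) xu(1) xu(4)] subX[OF xu(1) xu(4)]] by blast
  obtain Cv where Cv: "bic Cv" "{y} \<union> (insert v X) \<subseteq> Cv"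
    using ext[OF cbY[OF yv(3) yv(1) yv(4)] subY[OF yv(1) yv(4)]] by blast
  have cbu: "cb Cu" "Cu \<subseteq> V" using Cu bic_cb bic_V by blast+
  have cbv: "cb Cv" "Cv \<subseteq> V" using Cv bic_cb bic_V by blast+
  have notall: "\<not> B \<subseteq> C" if "cb C" "C \<subseteq> V" "w \<in> C" "w \<notin> B" for C w
    using maxB[of C] that by blast
  have YCu: "Y \<subseteq> Cu" "u \<in> Cu" "x \<in> Cu" using Cu by blast+
  have XCv: "X \<subseteq> Cv" "v \<in> Cv" "y \<in> Cv" using Cv by blast+
  have h1: "Cu \<inter> B \<noteq> {}" "Cv \<inter> B \<noteq> {}" using YCu XCv xB by blast+
  have h2: "Cu \<noteq> B" "Cv \<noteq> B" using YCu XCv xu yv by blast+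
  have h3: "Cu \<noteq> Cv"
  proof
    assume "Cu = Cv"
    then have "B \<subseteq> Cu" using YCu XCv BXY by blast
    then show False using notall[OF cbu YCu(2) xu(3)] by blast
  qed
  have CvY: "\<not> Y \<subseteq> Cv"
  proof
    assume "Y \<subseteq> Cv"
    then have "B \<subseteq> Cv" using XCv BXY by blast
    then show False using notall[OF cbv XCv(2) yv(3)] by blast
  qed
  have CuX: "\<not> X \<subseteq> Cu"
  proof
    assume "X \<subseteq> Cu"
    then have "B \<subseteq> Cu" using YCu BXY by blast
    then show False using notall[OF cbu YCu(2) xu(3)] by blast
  qed
  note P2 = pick2[OF Cu(1) Cv(1) h1 h2 h3]
  note tX = typeX2[OF Cu(1) Cv(1) h1 h2 h3]
  note tY = typeY2[OF Cu(1) Cv(1) h1 h2 h3]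
  have toCu: "x' \<in> Cu \<and> w \<in> Cu" if w: "w \<in> V" "w \<notin> B" "x' \<in> X" "E x' w" for w x'
  proof -
    obtain C where C: "{x'} \<union> (insert w Y) \<subseteq> C" "C = Cu \<or> C = Cv"
      using P2[OF cbX[OF w(2) w(3) w(4)] subX[OF w(3) w(4)], of x' w] w BXY by blast
    then show ?thesis using CvY by blast
  qed
  have toCv: "y' \<in> Cv \<and> w \<in> Cv" if w: "w \<in> V" "w \<notin> B" "y' \<in> Y" "E y' w" for w y'
  proof -
    obtain C where C: "{y'} \<union> (insert w X) \<subseteq> C" "C = Cu \<or> C = Cv"
      using P2[OF cbY[OF w(2) w(3) w(4)] subY[OF w(3) w(4)], of y' w] w BXY by blast
    then show ?thesis using CuX by blast
  qed
  have inCu: "E x' u" if "x' \<in> X" "x' \<in> Cu" for x'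
  proof -
    have "E y x'" using eYX that(1) yv(1) by blast
    then have "E y u \<longleftrightarrow> \<not> E x' u" using cb_xor[OF cbu(1) _ that(2) YCu(2)] YCu(1) yv(1) by blast
    moreover have "\<not> E y u" using nY[OF xu(3) xu(1) xu(4) yv(1)] Esym by blast
    ultimately show ?thesis by blast
  qed
  have inCv: "E y' v" if "y' \<in> Y" "y' \<in> Cv" for y'
  proof -
    have "E x y'" using eXY that(1) xu(1) by blast
    then have "E x v \<longleftrightarrow> \<not> E y' v" using cb_xor[OF cbv(1) _ that(2) XCv(2)] XCv(1) xu(1) by blast
    moreover have "\<not> E x v" using nX[OF yv(3) yv(1) yv(4) xu(1)] Esym by blast
    ultimately show ?thesis by blast
  qed
  have onlyx: "x' = x" if w: "w \<in> V" "w \<notin> B" "x' \<in> X" "E x' w" for w x'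
  proof -
    have "x' \<in> Cu" using toCu[OF w] by blast
    then have a: "E x' u" using inCu w(3) by blast
    show ?thesis using tX[OF w(3) xu(1)] toCu[OF xu(2) xu(3) w(3) a] YCu(3) XCv(1) w(3) xu(1) by blast
  qed
  have onlyy: "y' = y" if w: "w \<in> V" "w \<notin> B" "y' \<in> Y" "E y' w" for w y'
  proof -
    have "y' \<in> Cv" using toCv[OF w] by blast
    then have a: "E y' v" using inCv w(3) by blast
    show ?thesis using tY[OF w(3) yv(1)] toCv[OF yv(2) yv(3) w(3) a] XCv(3) YCu(1) w(3) yv(1) by blast
  qed
  have xy: "E x y" using eXY xu(1) yv(1) by blast
  have Cu_NB: "Cu \<subseteq> NB"
  proof
    fix c assume c: "c \<in> Cu"
    have "E x c \<or> E y c" using cb_xor[OF cbu(1) YCu(3) _ c xy] YCu(1) yv(1) by blast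
    then show "c \<in> NB" using NB_I xB by blast
  qed
  have Cv_NB: "Cv \<subseteq> NB"
  proof
    fix c assume c: "c \<in> Cv"
    have "E x c \<or> E y c" using cb_xor[OF cbv(1) _ XCv(3) c xy] XCv(1) xu(1) by blast
    then show "c \<in> NB" using NB_I xB by blast
  qed
  have VNB: "V \<subseteq> NB" by (rule CL2[OF Cu(1) Cv(1) h1 h2 h3 Cu_NB Cv_NB])
  define UX where "UX w \<longleftrightarrow> w \<in> V \<and> w \<notin> B \<and> E x w" for w
  define UY where "UY w \<longleftrightarrow> w \<in> V \<and> w \<notin> B \<and> E y w" for w
  have classify: "UX w \<or> UY w" if w: "w \<in> V" "w \<notin> B" for w
  proof -
    obtain b where b: "b \<in> B" "E b w" using NB_cases[of w] VNB w by blast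
    then have "b \<in> X \<or> b \<in> Y" using BXY by blast
    then show ?thesis unfolding UX_def UY_def using onlyx onlyy w b by blast
  qed
  have UXB: "E w z \<longleftrightarrow> z = x" if "UX w" "z \<in> B" for w z
  proof -
    have "z \<in> X \<or> z \<in> Y" using that(2) BXY by blast
    then show ?thesis using that onlyx nY[of w x] xu(1) Esym unfolding UX_def by blast
  qed
  have UYB: "E w z \<longleftrightarrow> z = y" if "UY w" "z \<in> B" for w z
  proof -
    have "z \<in> X \<or> z \<in> Y" using that(2) BXY by blast
    then show ?thesis using that onlyy nX[of w y] yv(1) Esym unfolding UY_def by blast
  qed
  have UXX: "\<not> E w w'" if "UX w" "UX w'" for w w'
  proof -
    have "w \<in> Cu" "w' \<in> Cu" using toCu xu(1) that unfolding UX_def by blast+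
    then show ?thesis using cb_xor[OF cbu(1) YCu(3)] that unfolding UX_def by blast
  qed
  have UYY: "\<not> E w w'" if "UY w" "UY w'" for w w'
  proof -
    have "w \<in> Cv" "w' \<in> Cv" using toCv yv(1) that unfolding UY_def by blast+
    then show ?thesis using cb_xor[OF cbv(1) XCv(3)] that unfolding UY_def by blast
  qed
  obtain x0 where x0: "x0 \<in> X" "x0 \<noteq> x" using x1 by blast
  obtain y0 where y0: "y0 \<in> Y" "y0 \<noteq> y" using y1 by blast
  have UXY: "\<not> E w z" if wz: "UX w" "UY z" for w z
  proof
    assume wz': "E w z"
    have wx: "E w x" using wz Esym unfolding UX_def by blast
    have nxz: "\<not> E x z" using UYB[OF wz(2) xB(1)] Esym xu(1) yv(1) x1 XYd by blast
    have "cb {w, x, z}" using star[OF wx wz' nxz] .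
    moreover have "{w, x, z} \<subseteq> V" using wz XV xu(1) unfolding UX_def UY_def by blast
    moreover have "z \<notin> B" using wz unfolding UY_def by blast
    ultimately obtain C where C: "{w,x,z} \<subseteq> C" "C = Cu \<or> C = Cv"
      using P2[of "{w,x,z}" x z] xB by blast
    have y0B: "y0 \<in> B" "x0 \<in> B" using x0 y0 BXY by blast+
    have y0Cu: "y0 \<in> Cu" using YCu y0 by blast
    have x0Cv: "x0 \<in> Cv" using XCv x0 by blast
    show False
    proof (cases "C = Cu")
      case True
      have "E x y0" using eXY xu(1) y0(1) by blast
      then have "E x z \<longleftrightarrow> \<not> E y0 z" using cb_xor[OF cbu(1) YCu(3) y0Cu] C True by blast
      moreover have "\<not> E y0 z" using UYB[OF wz(2) y0B(1)] y0 Esym by blast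
      ultimately show False using nxz by blast
    next
      case False
      then have CCv: "C = Cv" using C by blast
      have "E y x0" using eYX yv(1) x0(1) by blast
      then have "E y w \<longleftrightarrow> \<not> E x0 w" using cb_xor[OF cbv(1) XCv(3) x0Cv] C CCv by blast
      moreover have "\<not> E x0 w" using UXB[OF wz(1) y0B(2)] x0 Esym by blast
      moreover have "\<not> E y w" using UXB[OF wz(1) xB(2)] Esym xu(1) yv(1) XYd by blast
      ultimately show False by blast
    qed
  qed
  have Xuniq: "w = w'" if "UX w" "UX w'" for w w'
  proof (rule twin)
    show "w \<in> V" "w' \<in> V" using that unfolding UX_def by blast+
    fix z show "E w z \<longleftrightarrow> E w' z"
    proof (cases "z \<in> V")
      case False then show ?thesis using EV2 by blast
    next
      case True
      show ?thesis
      proof (cases "z \<in> B")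
        case True then show ?thesis using UXB that by blast
      next
        case False
        then have "UX z \<or> UY z" using classify \<open>z \<in> V\<close> by blast
        then show ?thesis using UXX UXY that by blast
      qed
    qed
  qed
  have Yuniq: "w = w'" if "UY w" "UY w'" for w w'
  proof (rule twin)
    show "w \<in> V" "w' \<in> V" using that unfolding UY_def by blast+
    fix z show "E w z \<longleftrightarrow> E w' z"
    proof (cases "z \<in> V")
      case False then show ?thesis using EV2 by blast
    next
      case True
      show ?thesis
      proof (cases "z \<in> B")
        case True then show ?thesis using UYB that by blast
      next
        case False
        then have "UX z \<or> UY z" using classify \<open>z \<in> V\<close> by blast
        then show ?thesis using UYY UXY that Esym by blast
      qed
    qed
  qed
  have Xeq: "X \<subseteq> {x, x0}"
  proof
    fix x' assume x': "x' \<in> X"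
    show "x' \<in> {x, x0}"
    proof (cases "E x' u")
      case True
      then have "x' \<in> Cu" using toCu[OF xu(2) xu(3) x'] by blast
      then have "x' = x" using tX[OF x' xu(1)] YCu(3) XCv(1) x' xu(1) by blast
      then show ?thesis by blast
    next
      case False
      then have n: "x' \<notin> Cu" using inCu x' by blast
      have "x0 \<notin> Cu"
      proof
        assume "x0 \<in> Cu"
        then have "E x0 u" using inCu x0 by blast
        then have "x0 \<in> Cu" using toCu[OF xu(2) xu(3) x0(1)] by blast
        then have "x0 = x" using tX[OF x0(1) xu(1)] YCu(3) XCv(1) x0(1) xu(1) by blast
        then show False using x0 by blast
      qed
      then have "x' = x0" using tX[OF x' x0(1)] n XCv(1) x' x0(1) by blast
      then show ?thesis by blast
    qed
  qed
  have Yeq: "Y \<subseteq> {y, y0}"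
  proof
    fix y' assume y': "y' \<in> Y"
    show "y' \<in> {y, y0}"
    proof (cases "E y' v")
      case True
      then have "y' \<in> Cv" using toCv[OF yv(2) yv(3) y'] by blast
      then have "y' = y" using tY[OF y' yv(1)] XCv(3) YCu(1) y' yv(1) by blast
      then show ?thesis by blast
    next
      case False
      then have n: "y' \<notin> Cv" using inCv y' by blast
      have "y0 \<notin> Cv"
      proof
        assume "y0 \<in> Cv"
        then have "E y0 v" using inCv y0 by blast
        then have "y0 \<in> Cv" using toCv[OF yv(2) yv(3) y0(1)] by blast
        then have "y0 = y" using tY[OF y0(1) yv(1)] XCv(3) YCu(1) y0(1) yv(1) by blast
        then show False using y0 by blast
      qed
      then have "y' = y0" using tY[OF y' y0(1)] n YCu(1) y' y0(1) by blast
      then show ?thesis by blast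
    qed
  qed
  have finX: "finite {w. UX w}" using finV unfolding UX_def by simp
  have finY: "finite {w. UY w}" using finV unfolding UY_def by simp
  have cX: "card {w. UX w} \<le> 1" using Xuniq finX by (simp add: card_le_Suc0_iff_eq)
  have cY: "card {w. UY w} \<le> 1" using Yuniq finY by (simp add: card_le_Suc0_iff_eq)
  have "V \<subseteq> {x, x0, y, y0} \<union> ({w. UX w} \<union> {w. UY w})"
  proof
    fix z assume z: "z \<in> V"
    show "z \<in> {x, x0, y, y0} \<union> ({w. UX w} \<union> {w. UY w})"
    proof (cases "z \<in> B")
      case True then show ?thesis using BXY Xeq Yeq by blast
    next
      case False then show ?thesis using classify[OF z False] by blast
    qed
  qed
  then have "card V \<le> card ({x, x0, y, y0} \<union> ({w. UX w} \<union> {w. UY w}))"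
    using finX finY by (intro card_mono) auto
  also have "\<dots> \<le> card {x, x0, y, y0} + card ({w. UX w} \<union> {w. UY w})" by (rule card_Un_le)
  also have "card ({w. UX w} \<union> {w. UY w}) \<le> card {w. UX w} + card {w. UY w}" by (rule card_Un_le)
  also have "card {x, x0, y, y0} \<le> 4" by (simp add: card_insert_if)
  finally show False using cX cY big by linarith
qed

end



context S
begin

lemma caseB1:
  assumes X: "X = {b}" and ys: "ya \<in> Y" "yb \<in> Y" "ya \<noteq> yb"
    and u: "u \<in> V" "u \<notin> B" "E b u"
  shows False
proof -
  have bB: "b \<in> B" using X BXY by blast
  have bV: "b \<in> V" using bB BV by blast
  have bY: "E b y" "E y b" if hh18: "y \<in> Y" for y using eXY eYX X hh18 by blast+
  have Bc: "z \<in> B \<longleftrightarrow> z = b \<or> z \<in> Y" for z using X BXY by blast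
  have nbb: "\<not> E b b" using Eirr by blast
  obtain y1 where y1: "y1 \<in> Y" "E u y1"
  proof (rule ccontr)
    assume h: "\<not> thesis"
    have "\<forall>y\<in>Y. \<not> E u y" using h that by blast
    moreover have "\<forall>x\<in>X. E u x" using X Esym[OF u(3)] by blast
    ultimately show False using notside2[OF u(1) u(2)] by blast
  qed
  have ub: "E u b" using Esym u(3) by blast
  have y1u: "E y1 u" using Esym y1(2) by blast
  obtain C where C: "bic C" "{b,u} \<subseteq> C"
    using ext[OF edge_cb[OF u(3)]] bV u(1) by blast
  obtain D where D: "bic D" "{y1,u} \<subseteq> D"
    using ext[OF edge_cb[OF y1u]] YV y1(1) u(1) by blast
  have cbC: "cb C" using C bic_cb by blast
  have cbD: "cb D" using D bic_cb by blast
  have bC: "b \<in> C" "u \<in> C" using C by blast+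
  have yD: "y1 \<in> D" "u \<in> D" using D by blast+
  have y1C: "y1 \<notin> C"
  proof
    assume "y1 \<in> C"
    then show False using cb_xor[OF cbC bC(1) bC(2) _ u(3), of y1] bY[OF y1(1)] y1(2) by blast
  qed
  have bD: "b \<notin> D"
  proof
    assume "b \<in> D"
    then show False using cb_xor[OF cbD yD(1) yD(2) _ y1u, of b] bY[OF y1(1)] ub by blast
  qed
  have h1: "C \<inter> B \<noteq> {}" "D \<inter> B \<noteq> {}" using bC yD bB y1(1) BXY by blast+
  have h2: "C \<noteq> B" "D \<noteq> B" using bC yD u(2) by blast+
  have h3: "C \<noteq> D" using bC bD by blast
  note P2 = pick2[OF C(1) D(1) h1 h2 h3]
  have starC: "z \<in> C"
    if hs: "cb S'" "S' \<subseteq> V" "b \<in> S'" "ou \<in> S'" "ou \<notin> B" "z \<in> S'" for S' ou z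
  proof -
    obtain C' where "S' \<subseteq> C'" "C' = C \<or> C' = D" using P2[OF hs(1,2,3) bB hs(4,5)] by blast
    then show ?thesis using bD hs(3,6) by blast
  qed
  define Ob where "Ob q \<longleftrightarrow> q \<in> V \<and> q \<notin> B \<and> E b q" for q
  have ObC: "q \<in> C" if hh17: "Ob q" for q
  proof -
    have "cb {b, q, q}" using star[of b q q] hh17 Eirr unfolding Ob_def by blast
    moreover have "{b,q,q} \<subseteq> V" using hh17 bV unfolding Ob_def by blast
    ultimately show ?thesis using starC[of "{b,q,q}" q q] hh17 unfolding Ob_def by blast
  qed
  have Obu: "Ob u" unfolding Ob_def using u by blast
  have L1: "E b q" if hh16: "y \<in> Y" "Ob q'" "E y q'" "E y q" "q \<noteq> b" for y q' q
  proof (rule ccontr)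
    assume nbq: "\<not> E b q"
    have qB: "q \<notin> B" using hh16(1,4,5) Bc indY by blast
    have "cb {y, b, q}" using star[OF bY(2)[OF hh16(1)] hh16(4) nbq] .
    moreover have "{y,b,q} \<subseteq> V" using bV YV hh16(1) EV2[OF hh16(4)] by blast
    ultimately have "y \<in> C" using starC[of "{y,b,q}" q y] qB by blast
    moreover have "q' \<in> C" using ObC hh16(2) by blast
    ultimately show False
      using cb_xor[OF cbC bC(1) \<open>q' \<in> C\<close> \<open>y \<in> C\<close>] hh16(2,3) bY[OF hh16(1)] Esym unfolding Ob_def by blast
  qed
  have L2: "E y q''" if hh15: "y \<in> Y" "Ob q'" "E y q'" "Ob q''" for y q' q''
  proof (rule ccontr)
    assume n: "\<not> E y q''"
    have "cb {b, y, q''}" using star[OF bY(1)[OF hh15(1)] _ n] hh15(4) unfolding Ob_def by blast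
    moreover have "{b,y,q''} \<subseteq> V" using bV YV hh15(1,4) unfolding Ob_def by blast
    ultimately have "y \<in> C" using starC[of "{b,y,q''}" q'' y] hh15(4) unfolding Ob_def by blast
    moreover have "q' \<in> C" using ObC hh15(2) by blast
    ultimately show False
      using cb_xor[OF cbC bC(1) \<open>q' \<in> C\<close> \<open>y \<in> C\<close>] hh15(2,3) bY[OF hh15(1)] Esym unfolding Ob_def by blast
  qed
  have Nleaf: "E y z \<longleftrightarrow> z = b \<or> Ob z" if hh14: "y \<in> Y" "Ob q'" "E y q'" for y q' z
  proof
    assume h: "E y z"
    show "z = b \<or> Ob z"
    proof (cases "z = b")
      case False
      then have "E b z" using L1[OF hh14 h] by blast
      moreover have "z \<notin> B" using False h hh14(1) Bc indY by blast
      ultimately show ?thesis unfolding Ob_def using EV2 by blast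
    qed blast
  next
    assume "z = b \<or> Ob z" then show "E y z" using bY hh14 L2 by blast
  qed
  have y1uniq: "y = y1" if hh13: "y \<in> Y" "Ob q'" "E y q'" for y q'
  proof (rule twin)
    show "y \<in> V" "y1 \<in> V" using YV hh13(1) y1(1) by blast+
    fix z show "E y z \<longleftrightarrow> E y1 z" using Nleaf[OF hh13] Nleaf[OF y1(1) Obu y1u] by blast
  qed
  obtain y0 where y0: "y0 \<in> Y" "y0 \<noteq> y1" using ys by blast
  have y0Ob: "\<not> E y0 q" if hh12: "Ob q" for q using y1uniq[OF y0(1) hh12] y0 by blast
  have y0C: "y \<in> C" if hh11: "y \<in> Y" "y \<noteq> y1" for y
  proof -
    have n: "\<not> E u y" using y1uniq[OF hh11(1) Obu] hh11 Esym by blast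
    have "cb {b, u, y}" using star[OF u(3) bY(1)[OF hh11(1)] n] .
    moreover have "{b,u,y} \<subseteq> V" using bV u(1) YV hh11(1) by blast
    ultimately show ?thesis using starC[of "{b,u,y}" u y] u(2) by blast
  qed
  have W1: "q \<in> C \<and> E u q \<and> \<not> E b q" if hh10: "y \<in> Y" "y \<noteq> y1" "E y q" "q \<noteq> b" for y q
  proof -
    have qB: "q \<notin> B" using hh10 Bc indY by blast
    have nbq: "\<not> E b q"
    proof
      assume "E b q"
      then have "Ob q" unfolding Ob_def using qB EV2 by blast
      then show False using y1uniq[OF hh10(1) _ hh10(3)] hh10(2) by blast
    qed
    have "cb {y, b, q}" using star[OF bY(2)[OF hh10(1)] hh10(3) nbq] .
    moreover have "{y,b,q} \<subseteq> V" using bV YV hh10(1) EV2[OF hh10(3)] by blast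
    ultimately have qC: "q \<in> C" using starC[of "{y,b,q}" q q] qB by blast
    have "E u q" using cb_xor[OF cbC bC(1) bC(2) qC u(3)] nbq by blast
    then show ?thesis using qC nbq by blast
  qed
  have Y2: "Y = {y0, y1}"
  proof
    show "{y0, y1} \<subseteq> Y" using y0 y1 by blast
    show "Y \<subseteq> {y0, y1}"
    proof
      fix y assume y: "y \<in> Y"
      show "y \<in> {y0, y1}"
      proof (rule ccontr)
        assume nn: "y \<notin> {y0, y1}"
        have tr: "E p q" if hh9: "p \<in> Y" "p \<noteq> y1" "p' \<in> Y" "p' \<noteq> y1" "E p' q" for p p' q
        proof (cases "q = b")
          case True then show ?thesis using bY hh9(1) by blast
        next
          case False
          have "q \<in> C" "\<not> E b q" using W1[OF hh9(3,4,5) False] by blast+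
          moreover have "p \<in> C" using y0C hh9(1,2) by blast
          ultimately show ?thesis using cb_xor[OF cbC bC(1) \<open>p \<in> C\<close> \<open>q \<in> C\<close>] bY hh9(1) by blast
        qed
        have "y = y0"
        proof (rule twin)
          show "y \<in> V" "y0 \<in> V" using YV y y0 by blast+
          fix z show "E y z \<longleftrightarrow> E y0 z" using tr[of y y0 z] tr[of y0 y z] y y0 nn by blast
        qed
        then show False using nn by blast
      qed
    qed
  qed
  have Bset: "B = {b, y0, y1}" using X Y2 BXY by blast
  have Obuniq: "q = u" if hh8: "Ob q" for q
  proof -
    have tr: "E q' p" if hh7: "Ob q" "Ob q'" "E q p" for q q' p
    proof (rule ccontr)
      assume n: "\<not> E q' p"
      have qC: "q \<in> C" "q' \<in> C" using ObC hh7 by blast+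
      have pb: "p \<noteq> b" using n hh7(2) Esym unfolding Ob_def by blast
      have py1: "p \<noteq> y1" using n L2[OF y1(1) Obu y1u hh7(2)] Esym by blast
      have py0: "p \<noteq> y0" using y0Ob[OF hh7(1)] hh7(3) Esym by blast
      have pB: "p \<notin> B" using Bset pb py1 py0 by blast
      have nbp: "\<not> E b p"
      proof
        assume bp: "E b p"
        then have "Ob p" unfolding Ob_def using pB EV2 by blast
        then have "p \<in> C" using ObC by blast
        then show False using cb_xor[OF cbC bC(1) qC(1) \<open>p \<in> C\<close>] hh7(1,3) bp unfolding Ob_def by blast
      qed
      have "cb {q, b, p}" using star[OF _ hh7(3) nbp] hh7(1) Esym unfolding Ob_def by blast
      moreover have "{q,b,p} \<subseteq> V" using bV hh7(1) EV2[OF hh7(3)] unfolding Ob_def by blast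
      ultimately have "p \<in> C" using starC[of "{q,b,p}" p p] pB by blast
      then show False using cb_xor[OF cbC bC(1) qC(2) \<open>p \<in> C\<close>] hh7(2) nbp n unfolding Ob_def by blast
    qed
    show ?thesis
    proof (rule twin)
      show "q \<in> V" "u \<in> V" using hh8 u unfolding Ob_def by blast+
      fix z show "E q z \<longleftrightarrow> E u z" using tr[OF hh8 Obu] tr[OF Obu hh8] by blast
    qed
  qed
  have y0D: "y0 \<notin> D"
  proof
    assume "y0 \<in> D"
    then show False using cb_xor[OF cbD yD(1) yD(2) _ y1u, of y0] indY y0 y1 y0Ob[OF Obu] Esym by blast
  qed
  define W where "W w \<longleftrightarrow> E y0 w \<and> w \<noteq> b" for w
  have Wf: "w \<in> C \<and> E u w \<and> \<not> E b w \<and> \<not> E y1 w \<and> w \<notin> B \<and> w \<in> V" if hh6: "W w" for w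
  proof -
    have a: "w \<in> C" "E u w" "\<not> E b w" using W1[OF y0 _] hh6 unfolding W_def by blast+
    have wB: "w \<notin> B" using hh6 y0(1) Bc indY unfolding W_def by blast
    have "\<not> E y1 w"
    proof
      assume "E y1 w"
      then have "w = b \<or> Ob w" using Nleaf[OF y1(1) Obu y1u] by blast
      then show False using a(3) hh6 unfolding Ob_def W_def by blast
    qed
    then show ?thesis using a wB EV2 hh6 unfolding W_def by blast
  qed
  have Wuniq: "w = w'" if hh5: "W w" "W w'" for w w'
  proof -
    have tr: "E w' p" if hh4: "W w" "W w'" "E w p" for w w' p
    proof (rule ccontr)
      assume n: "\<not> E w' p"
      have fw: "w \<in> C" "E u w" "\<not> E b w" "\<not> E y1 w" "w \<notin> B" "w \<in> V" using Wf[OF hh4(1)] by blast+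
      have fw': "w' \<in> C" "E u w'" "\<not> E b w'" "\<not> E y1 w'" using Wf[OF hh4(2)] by blast+
      have p1: "p \<noteq> y0" using n hh4(2) Esym unfolding W_def by blast
      have p2: "p \<noteq> u" using n fw'(2) Esym by blast
      have p3: "p \<noteq> b" using fw(3) hh4(3) Esym by blast
      have p4: "p \<noteq> y1" using fw(4) hh4(3) Esym by blast
      have pB: "p \<notin> B" using Bset p1 p3 p4 by blast
      have ny0p: "\<not> E y0 p"
      proof
        assume "E y0 p"
        then have "W p" unfolding W_def using p3 by blast
        then have "p \<in> C" using Wf by blast
        then show False using cb_xor[OF cbC _ fw(1) \<open>p \<in> C\<close>, of y0] y0C[OF y0] hh4(1,3) \<open>E y0 p\<close> unfolding W_def by blast
      qed
      have wy0: "E w y0" using hh4(1) Esym unfolding W_def by blast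
      have "cb {w, y0, p}" using star[OF wy0 hh4(3) ny0p] .
      moreover have "{w, y0, p} \<subseteq> V" using fw(6) YV y0(1) EV2[OF hh4(3)] by blast
      moreover have "y0 \<in> B" using y0 BXY by blast
      ultimately obtain C' where C': "{w,y0,p} \<subseteq> C'" "C' = C \<or> C' = D"
        using P2[of "{w,y0,p}" y0 p] pB by blast
      then have pC: "p \<in> C" using y0D by blast
      have "E b p" using cb_xor[OF cbC _ bC(1) pC, of y0] y0C[OF y0] bY[OF y0(1)] ny0p by blast
      then have "Ob p" unfolding Ob_def using pB EV2 by blast
      then show False using Obuniq p2 by blast
    qed
    show ?thesis
    proof (rule twin)
      show "w \<in> V" "w' \<in> V" using Wf hh5 by blast+
      fix z show "E w z \<longleftrightarrow> E w' z" using tr[OF hh5] tr[OF hh5(2) hh5(1)] by blast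
    qed
  qed
  have Nb: "z \<in> {y0, y1, u}" if hh3: "E b z" for z
  proof (cases "z \<in> B")
    case True then show ?thesis using Bset hh3 nbb by blast
  next
    case False
    then have "Ob z" unfolding Ob_def using hh3 EV2 by blast
    then show ?thesis using Obuniq by blast
  qed
  have Nu: "z = b \<or> z = y1 \<or> W z" if hh2: "E u z" for z
  proof (rule ccontr)
    assume n: "\<not> ?thesis"
    have zy0: "z \<noteq> y0" using y0Ob[OF Obu] hh2 Esym by blast
    have zB: "z \<notin> B" using Bset n zy0 by blast
    have nbz: "\<not> E b z"
    proof
      assume "E b z" then have "z = u" using Nb zB Bset by blast
      then show False using hh2 Eirr by blast
    qed
    have "cb {u, b, z}" using star[OF ub hh2 nbz] .
    moreover have "{u, b, z} \<subseteq> V" using u(1) bV EV2[OF hh2] by blast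
    ultimately have zC: "z \<in> C" using starC[of "{u,b,z}" z z] zB by blast
    have "E y0 z" using cb_xor[OF cbC bC(1) y0C[OF y0] zC] bY(1)[OF y0(1)] nbz by blast
    then show False using n unfolding W_def by blast
  qed
  have Nw: "z = u \<or> z = y0" if hh1: "W w" "E w z" for w z
  proof (rule ccontr)
    assume n: "\<not> ?thesis"
    have fw: "w \<in> C" "E u w" "\<not> E b w" "\<not> E y1 w" "w \<notin> B" "w \<in> V" using Wf[OF hh1(1)] by blast+
    have zb: "z \<noteq> b" "z \<noteq> y1" using fw hh1(2) Esym by blast+
    have zB: "z \<notin> B" using Bset n zb by blast
    have ny0z: "\<not> E y0 z"
    proof
      assume "E y0 z"
      then have "W z" unfolding W_def using zb by blast
      then have "z = w" using Wuniq hh1(1) by blast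
      then show False using hh1(2) Eirr by blast
    qed
    have wy0: "E w y0" using hh1(1) Esym unfolding W_def by blast
    have "cb {w, y0, z}" using star[OF wy0 hh1(2) ny0z] .
    moreover have "{w, y0, z} \<subseteq> V" using fw(6) YV y0(1) EV2[OF hh1(2)] by blast
    moreover have "y0 \<in> B" using y0 BXY by blast
    ultimately obtain C' where C': "{w,y0,z} \<subseteq> C'" "C' = C \<or> C' = D"
      using P2[of "{w,y0,z}" y0 z] zB by blast
    then have zC: "z \<in> C" using y0D by blast
    have "E b z" using cb_xor[OF cbC _ bC(1) zC, of y0] y0C[OF y0] bY[OF y0(1)] ny0z by blast
    then have "z = u" using Nb zB Bset by blast
    then show False using n by blast
  qed
  have finW: "finite {w. W w}" using finV Wf by (metis (mono_tags, lifting) finite_subset mem_Collect_eq subsetI)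
  have cW: "card {w. W w} \<le> 1" using Wuniq finW by (simp add: card_le_Suc0_iff_eq)
  have "card V \<le> card ({b, y0, y1, u} \<union> {w. W w})"
  proof (rule closure_card)
    show "b \<in> {b, y0, y1, u} \<union> {w. W w}" "b \<in> V" using bV by blast+
    show "finite ({b, y0, y1, u} \<union> {w. W w})" using finW by blast
  next
    fix k z assume k: "k \<in> {b, y0, y1, u} \<union> {w. W w}" and kz: "E k z"
    show "z \<in> {b, y0, y1, u} \<union> {w. W w}"
    proof -
      have "k = b \<or> k = y0 \<or> k = y1 \<or> k = u \<or> W k" using k by blast
      moreover have "k = y0 \<Longrightarrow> ?thesis" using kz unfolding W_def by blast
      moreover have "k = y1 \<Longrightarrow> ?thesis" using kz Nleaf[OF y1(1) Obu y1u] Obuniq by blast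
      moreover have "k = b \<Longrightarrow> ?thesis" using kz Nb by blast
      moreover have "k = u \<Longrightarrow> ?thesis" using kz Nu by blast
      moreover have "W k \<Longrightarrow> ?thesis" using kz Nw by blast
      ultimately show ?thesis by blast
    qed
  qed
  also have "\<dots> \<le> card {b, y0, y1, u} + card {w. W w}" by (rule card_Un_le)
  also have "card {b, y0, y1, u} \<le> 4" by (simp add: card_insert_if)
  finally show False using cW big by linarith
qed

end



lemma card_img3:
  fixes f :: "'a \<Rightarrow> bool \<times> bool"
  assumes "inj_on f A" "f ` A \<subseteq> UNIV - {t}"
  shows "card A \<le> 3"
proof -
  have U: "(UNIV :: (bool \<times> bool) set) = {(True,True),(True,False),(False,True),(False,False)}"
    by auto
  obtain a c where t: "t = (a, c)" by (cases t)
  have "card (UNIV - {t} :: (bool \<times> bool) set) = 3"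
    unfolding U t by (cases a; cases c) (simp_all add: insert_Diff_if card_insert_if)
  moreover have "card (f ` A) \<le> card (UNIV - {t} :: (bool \<times> bool) set)"
    by (rule card_mono) (use assms(2) in auto)
  moreover have "card (f ` A) = card A" using card_image[OF assms(1)] .
  ultimately show ?thesis by simp
qed

lemma card_img2:
  assumes "inj_on f A" "f ` A \<subseteq> {s, t}"
  shows "card A \<le> 2"
proof -
  have "card (f ` A) \<le> card {s,t}" by (rule card_mono) (use assms(2) in auto)
  also have "\<dots> \<le> 2" by (simp add: card_insert_if)
  finally show ?thesis using card_image[OF assms(1)] by simp
qed

context S
begin

lemma swap12: "S V E B X Y B2 B1"
proof -
  have "S_axioms V E B X Y B2 B1"
    unfolding S_axioms_def
  proof (intro conjI)
    show "\<forall>C. bic C \<longrightarrow> C \<inter> B \<noteq> {} \<longrightarrow> C = B \<or> C = B2 \<or> C = B1" using only by blast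
    show "B2 \<noteq> B1" using d12 by blast
  qed (fact bB BXY Xne Yne XYd iX iY cXY b1 b2 n1 n2 m1 m2)+
  thus ?thesis using G_axioms unfolding S_def by blast
qed

end

locale S2 = S +
  fixes b
  assumes X1: "X = {b}" and Nb: "\<And>z. E b z \<Longrightarrow> z \<in> Y" and bb1: "b \<in> B1" and bb2: "b \<in> B2"
begin

lemma swap2: "S2 V E B X Y B2 B1 b"
  using swap12 X1 Nb bb1 bb2 unfolding S2_def S2_axioms_def by blast

lemma bB: "b \<in> B" using X1 BXY by blast
lemma bV: "b \<in> V" using bB BV by blast
lemma bY: "y \<in> Y \<Longrightarrow> E b y" "y \<in> Y \<Longrightarrow> E y b" using eXY eYX X1 by blast+
lemma Bc: "z \<in> B \<longleftrightarrow> z = b \<or> z \<in> Y" using X1 BXY by blast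
lemma nbq: "q \<notin> B \<Longrightarrow> \<not> E b q" using Nb Bc by blast
lemma nbq': "q \<notin> B \<Longrightarrow> \<not> E q b" using nbq Esym by blast

lemma Cs: "C = B1 \<or> C = B2 \<Longrightarrow> cb C \<and> b \<in> C" using b1 b2 bic_cb bb1 bb2 by blast

lemma E1:
  assumes "C = B1 \<or> C = B2" "y \<in> Y" "y \<in> C" "q \<in> C" "q \<notin> B"
  shows "E y q" "E q y"
proof -
  have c: "cb C" "b \<in> C" using Cs assms(1) by blast+
  show "E y q" using cb_xor[OF c(1) c(2) assms(3) assms(4) bY(1)[OF assms(2)]] nbq[OF assms(5)] by blast
  then show "E q y" using Esym by blast
qed

lemma E2:
  assumes "y \<in> Y" "E y q" "q \<notin> B"
  shows "\<exists>C. (C = B1 \<or> C = B2) \<and> y \<in> C \<and> q \<in> C"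
proof -
  have "cb {y, b, q}" using star[OF bY(2)[OF assms(1)] assms(2) nbq[OF assms(3)]] .
  moreover have "{y,b,q} \<subseteq> V" using bV YV assms(1) EV2[OF assms(2)] by blast
  ultimately obtain C where "{y,b,q} \<subseteq> C" "C = B1 \<or> C = B2"
    using pick[of "{y,b,q}" b q] bB assms(3) by blast
  then show ?thesis by blast
qed

lemma partner:
  assumes "C = B1 \<or> C = B2"
  shows "\<exists>y. y \<in> Y \<and> y \<in> C"
proof -
  have c: "cb C" "b \<in> C" using Cs assms by blast+
  obtain y where "y \<in> C" "E b y" using cb_partner[OF c] by blast
  then show ?thesis using Nb by blast
qed

lemma QQ:
  assumes "C = B1 \<or> C = B2" "q \<in> C" "r \<in> C" "q \<notin> B" "r \<notin> B"
  shows "\<not> E q r"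
proof -
  obtain y where y: "y \<in> Y" "y \<in> C" using partner assms(1) by blast
  have c: "cb C" using Cs assms(1) by blast
  have "E y q" "E y r" using E1[OF assms(1) y] assms by blast+
  then show ?thesis using cb_xor[OF c y(2) assms(2) assms(3)] by blast
qed

lemma Lqr:
  assumes Ci: "Ci = B1 \<or> Ci = B2" and q: "q \<in> Ci" "q \<notin> B" and r: "r \<in> V" "r \<notin> B" "E q r"
    and y: "y \<in> Y" "y \<in> Ci"
  shows "\<exists>Cj. (Cj = B1 \<or> Cj = B2) \<and> Cj \<noteq> Ci \<and> y \<in> Cj \<and> r \<in> Cj"
proof -
  have yr: "E y r"
  proof (rule ccontr)
    assume n: "\<not> E y r"
    have "E q y" using E1[OF Ci y q(1) q(2)] by blast
    then have "cb {q, y, r}" using star[OF _ r(3) n] by blast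
    moreover have "{q,y,r} \<subseteq> V" using r(1) YV y(1) EV1[OF r(3)] by blast
    moreover have "y \<in> B" using y Bc by blast
    ultimately obtain C' where C': "{q,y,r} \<subseteq> C'" "C' = B1 \<or> C' = B2"
      using pick[of "{q,y,r}" y r] r(2) by blast
    have c: "cb C'" "b \<in> C'" using Cs C'(2) by blast+
    have "E y b" using bY y by blast
    then have "E y r \<longleftrightarrow> \<not> E b r" using cb_xor[OF c(1) _ c(2), of y r] C'(1) by blast
    then show False using n nbq[OF r(2)] by blast
  qed
  obtain Cj where Cj: "Cj = B1 \<or> Cj = B2" "y \<in> Cj" "r \<in> Cj" using E2[OF y(1) yr r(2)] by blast
  have "Cj \<noteq> Ci"
  proof
    assume "Cj = Ci"
    then show False using QQ[OF Ci q(1) _ q(2) r(2)] Cj(3) r(3) by blast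
  qed
  then show ?thesis using Cj by blast
qed

lemma outside_NB:
  assumes "q \<in> V" "q \<notin> B" "q \<in> NB"
  shows "\<exists>y\<in>Y. E y q"
proof -
  obtain z where z: "z \<in> B" "E z q" using NB_cases[OF assms(3,2)] by blast
  have "z \<noteq> b" using z nbq[OF assms(2)] by blast
  then have "z \<in> Y" using z(1) Bc by blast
  then show ?thesis using z by blast
qed

lemma VNB: "V \<subseteq> NB"
proof (rule CL)
  show "B1 \<subseteq> NB" "B2 \<subseteq> NB"
  proof -
    have "C \<subseteq> NB" if Ci: "C = B1 \<or> C = B2" for C
    proof
      fix z assume z: "z \<in> C"
      show "z \<in> NB"
      proof (cases "z \<in> B")
        case True then show ?thesis using NB_B by blast
      next
        case False
        obtain y where y: "y \<in> Y" "y \<in> C" using partner Ci by blast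
        have "E y z" using E1[OF Ci y z False] by blast
        then show ?thesis using NB_I y Bc by blast
      qed
    qed
    then show "B1 \<subseteq> NB" "B2 \<subseteq> NB" by blast+
  qed
qed

lemma outside_in:
  assumes "q \<in> V" "q \<notin> B"
  shows "\<exists>y. y \<in> Y \<and> E y q \<and> (\<exists>C. (C = B1 \<or> C = B2) \<and> y \<in> C \<and> q \<in> C)"
proof -
  obtain y where y: "y \<in> Y" "E y q" using outside_NB assms VNB by blast
  then show ?thesis using E2[OF y assms(2)] by blast
qed

lemma noQQ:
  assumes P12: "B1 \<inter> Y \<noteq> B2 \<inter> Y" and q: "q \<in> V" "q \<notin> B" and r: "r \<in> V" "r \<notin> B"
  shows "\<not> E q r"
proof
  assume qr: "E q r"
  have rq: "E r q" using Esym qr by blast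
  obtain y Ci where y: "y \<in> Y" "Ci = B1 \<or> Ci = B2" "y \<in> Ci" "q \<in> Ci" using outside_in q by blast
  obtain Cj where Cj: "Cj = B1 \<or> Cj = B2" "Cj \<noteq> Ci" "r \<in> Cj"
    using Lqr[OF y(2) y(4) q(2) r qr y(1) y(3)] by blast
  have a: "y' \<in> Cj" if hh3: "y' \<in> Y" "y' \<in> Ci" for y'
  proof -
    obtain Ck where Ck: "Ck = B1 \<or> Ck = B2" "Ck \<noteq> Ci" "y' \<in> Ck" using Lqr[OF y(2) y(4) q(2) r qr hh3] by blast
    then have "Ck = Cj" using Cj y(2) by blast
    then show ?thesis using Ck by blast
  qed
  have c: "y' \<in> Ci" if hh2: "y' \<in> Y" "y' \<in> Cj" for y'
  proof -
    obtain Ck where Ck: "Ck = B1 \<or> Ck = B2" "Ck \<noteq> Cj" "y' \<in> Ck" using Lqr[OF Cj(1) Cj(3) r(2) q rq hh2] by blast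
    then have "Ck = Ci" using Cj y(2) by blast
    then show ?thesis using Ck by blast
  qed
  have "Ci \<inter> Y = Cj \<inter> Y" using a c by blast
  then show False using P12 y(2) Cj(1,2) by blast
qed

lemma Nq:
  assumes P12: "B1 \<inter> Y \<noteq> B2 \<inter> Y" and q: "q \<in> V" "q \<notin> B"
  shows "E q z \<longleftrightarrow> z \<in> Y \<and> ((z \<in> B1 \<and> q \<in> B1) \<or> (z \<in> B2 \<and> q \<in> B2))"
proof
  assume qz: "E q z"
  have zV: "z \<in> V" using EV2 qz by blast
  have zB: "z \<in> B" using noQQ[OF P12 q zV] qz by blast
  have "z \<noteq> b" using nbq'[OF q(2)] qz by blast
  then have zY: "z \<in> Y" using zB Bc by blast
  then show "z \<in> Y \<and> ((z \<in> B1 \<and> q \<in> B1) \<or> (z \<in> B2 \<and> q \<in> B2))"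
    using E2[OF zY _ q(2)] qz Esym by blast
next
  assume "z \<in> Y \<and> ((z \<in> B1 \<and> q \<in> B1) \<or> (z \<in> B2 \<and> q \<in> B2))"
  then show "E q z" using E1 q(2) by blast
qed

lemma typeO:
  assumes P12: "B1 \<inter> Y \<noteq> B2 \<inter> Y" and q: "q \<in> V" "q \<notin> B" and r: "r \<in> V" "r \<notin> B"
    and t: "q \<in> B1 \<longleftrightarrow> r \<in> B1" "q \<in> B2 \<longleftrightarrow> r \<in> B2"
  shows "q = r"
proof (rule twin[OF q(1) r(1)])
  fix z show "E q z \<longleftrightarrow> E r z" using Nq[OF P12 q, of z] Nq[OF P12 r, of z] t by blast
qed

lemma Nleaf:
  assumes P12: "B1 \<inter> Y \<noteq> B2 \<inter> Y" and y: "y \<in> Y" and z: "z \<in> V" "z \<notin> B"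
  shows "E y z \<longleftrightarrow> ((y \<in> B1 \<and> z \<in> B1) \<or> (y \<in> B2 \<and> z \<in> B2))"
  using Nq[OF P12 z, of y] Esym y by blast

lemma B2core:
  assumes P12: "B1 \<inter> Y \<noteq> B2 \<inter> Y"
    and alt: "(\<exists>y. y \<in> Y \<and> y \<in> B1 \<and> y \<in> B2) \<Longrightarrow> B2 - B \<subseteq> B1"
  shows False
proof -
  define Out where "Out = {q. q \<in> V \<and> q \<notin> B}"
  define \<tau> where "\<tau> z = (z \<in> B1, z \<in> B2)" for z
  have injY: "inj_on \<tau> Y"
    unfolding inj_on_def \<tau>_def using typeY by blast
  have injO: "inj_on \<tau> Out"
    unfolding inj_on_def \<tau>_def Out_def using typeO[OF P12] by blast
  have Oin: "q \<in> B1 \<or> q \<in> B2" if hh1: "q \<in> Out" for q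
    using outside_in hh1 unfolding Out_def by blast
  have cards: "card Y \<le> 3 \<and> card Out \<le> 2"
  proof (cases "\<exists>y. y \<in> Y \<and> y \<in> B1 \<and> y \<in> B2")
    case True
    then obtain y12 where y12: "y12 \<in> Y" "y12 \<in> B1" "y12 \<in> B2" by blast
    have sub: "B2 - B \<subseteq> B1" using alt True by blast
    have noTF: "\<not> (y \<in> B1 \<and> y \<notin> B2)" if y: "y \<in> Y" for y
    proof
      assume h: "y \<in> B1 \<and> y \<notin> B2"
      have "y = y12"
      proof (rule twin)
        show "y \<in> V" "y12 \<in> V" using YV y y12 by blast+
        fix z show "E y z \<longleftrightarrow> E y12 z"
        proof (cases "z \<in> V")
          case False then show ?thesis using EV2 by blast
        next
          case True
          show ?thesis
          proof (cases "z \<in> B")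
            case True
            then have "z = b \<or> z \<in> Y" using Bc by blast
            then show ?thesis using bY y y12 indY by blast
          next
            case False
            show ?thesis using Nleaf[OF P12 y \<open>z \<in> V\<close> False] Nleaf[OF P12 y12(1) \<open>z \<in> V\<close> False] h y12 sub False by blast
          qed
        qed
      qed
      then show False using h y12 by blast
    qed
    have "\<tau> ` Y \<subseteq> UNIV - {(True, False)}" unfolding \<tau>_def using noTF by blast
    then have cY: "card Y \<le> 3" using card_img3[OF injY] by blast
    have "\<tau> ` Out \<subseteq> {(True, False), (True, True)}" unfolding \<tau>_def using Oin sub unfolding Out_def by blast
    then have cO: "card Out \<le> 2" using card_img2[OF injO] by blast
    show ?thesis using cY cO by blast
  next
    case False
    have "\<tau> ` Y \<subseteq> UNIV - {(True, True)}" unfolding \<tau>_def using False by blast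
    then have cY: "card Y \<le> 3" using card_img3[OF injY] by blast
    have noTT: "\<not> (q \<in> B1 \<and> q \<in> B2)" if q: "q \<in> Out" for q
    proof
      assume h: "q \<in> B1 \<and> q \<in> B2"
      obtain y1 where y1: "y1 \<in> Y" "y1 \<in> B1" using partner by blast
      obtain y2 where y2: "y2 \<in> Y" "y2 \<in> B2" using partner by blast
      have qO: "q \<in> V" "q \<notin> B" using q unfolding Out_def by blast+
      have e1: "E q y1" using E1(2)[of B1 y1 q] y1 h qO by blast
      have e2: "E q y2" using E1(2)[of B2 y2 q] y2 h qO by blast
      have n12: "\<not> E y1 y2" using indY y1 y2 by blast
      have "cb {q, y1, y2}" using star[OF e1 e2 n12] .
      moreover have "{q,y1,y2} \<subseteq> V" using qO YV y1 y2 by blast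
      moreover have "y1 \<in> B" using y1 Bc by blast
      ultimately obtain C where "{q,y1,y2} \<subseteq> C" "C = B1 \<or> C = B2"
        using pick[of "{q,y1,y2}" y1 q] qO by blast
      then show False using False y1 y2 by blast
    qed
    have "\<tau> ` Out \<subseteq> {(True, False), (False, True)}" unfolding \<tau>_def using Oin noTT by blast
    then have cO: "card Out \<le> 2" using card_img2[OF injO] by blast
    show ?thesis using cY cO by blast
  qed
  have "V \<subseteq> insert b (Y \<union> Out)" using Bc unfolding Out_def by blast
  have finY: "finite Y" using finV YV finite_subset by blast
  have finO: "finite Out" using finV unfolding Out_def by simp
  have "card V \<le> card (insert b (Y \<union> Out))"
    using finY finO \<open>V \<subseteq> insert b (Y \<union> Out)\<close> by (intro card_mono) auto
  also have "\<dots> \<le> Suc (card (Y \<union> Out))"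
    using finY finO by (intro ins_le) auto
  also have "card (Y \<union> Out) \<le> card Y + card Out" by (rule card_Un_le)
  finally show False using cards big by linarith
qed

end



context S
begin

lemma S_self: "S V E B X Y B1 B2"
  using G_axioms S_axioms unfolding S_def by blast

lemma concl2I:
  assumes X: "X = {b}" and Nb: "\<And>z. E b z \<Longrightarrow> z \<in> Y" and Y: "Y = {a, c}" "a \<noteq> c"
    and pa: "\<And>z. E a z \<longleftrightarrow> z = b"
  shows "\<exists>a b c. B = {a, b, c} \<and> a \<noteq> b \<and> b \<noteq> c \<and> a \<noteq> c \<and>
            E a b \<and> E b c \<and> \<not> E a c \<and>
            nbhd V E a = {b} \<and> nbhd V E b = {a, c}"
proof (intro exI conjI)
  show "B = {a, b, c}" using BXY X Y by blast
  show "a \<noteq> b" "b \<noteq> c" using X Y XYd by blast+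
  show "a \<noteq> c" by (rule Y(2))
  show "E a b" using pa by blast
  show "E b c" using eXY X Y by blast
  show "\<not> E a c" using indY Y by blast
  have bV: "b \<in> V" using X XV by blast
  show "nbhd V E a = {b}" unfolding nbhd_def using pa bV by blast
  have "E b z \<longleftrightarrow> z \<in> Y" for z using Nb eXY X by blast
  then show "nbhd V E b = {a, c}" unfolding nbhd_def using Y YV by blast
qed

lemma caseB2:
  assumes X: "X = {b}" and ys: "ya \<in> Y" "yb \<in> Y" "ya \<noteq> yb" and Nb: "\<And>z. E b z \<Longrightarrow> z \<in> Y"
  shows "\<exists>a b c. B = {a, b, c} \<and> a \<noteq> b \<and> b \<noteq> c \<and> a \<noteq> c \<and>
            E a b \<and> E b c \<and> \<not> E a c \<and>
            nbhd V E a = {b} \<and> nbhd V E b = {a, c}"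
proof -
  have bB: "b \<in> B" using X BXY by blast
  have bV: "b \<in> V" using bB BV by blast
  have bY: "E b y" "E y b" if hh8: "y \<in> Y" for y using eXY eYX X hh8 by blast+
  have nbq: "\<not> E b q" if hh7: "q \<notin> B" for q using Nb hh7 BXY by blast
  define pend where "pend y \<longleftrightarrow> (\<forall>z. E y z \<longleftrightarrow> z = b)" for y
  have np: "\<exists>q. E y q \<and> q \<notin> B" if hh6: "y \<in> Y" "\<not> pend y" for y
  proof -
    obtain q where "\<not> (E y q \<longleftrightarrow> q = b)" using hh6(2) unfolding pend_def by blast
    then have q: "E y q" "q \<noteq> b" using bY hh6(1) by blast+
    then have "q \<notin> B" using indY hh6(1) X BXY by blast
    then show ?thesis using q by blast
  qed
  have starB: "\<exists>C. (C = B1 \<or> C = B2) \<and> b \<in> C \<and> y \<in> C \<and> q \<in> C" if hh5: "y \<in> Y" "E y q" "q \<notin> B" for y q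
  proof -
    have "cb {y, b, q}" using star[OF bY(2)[OF hh5(1)] hh5(2) nbq[OF hh5(3)]] .
    moreover have "{y,b,q} \<subseteq> V" using bV YV hh5(1) EV2[OF hh5(2)] by blast
    ultimately obtain C where "{y,b,q} \<subseteq> C" "C = B1 \<or> C = B2"
      using pick[of "{y,b,q}" b q] bB hh5(3) by blast
    then show ?thesis by blast
  qed
  have pend_uniq: "y = y'" if hh4: "y \<in> Y" "y' \<in> Y" "pend y" "pend y'" for y y'
    using twin[of y y'] YV hh4 unfolding pend_def by blast
  show ?thesis
  proof (cases "b \<in> B1 \<and> b \<in> B2")
    case False
    have one: "C = C'" if hh3: "C = B1 \<or> C = B2" "C' = B1 \<or> C' = B2" "b \<in> C" "b \<in> C'" for C C'
      using hh3 False by blast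
    have np_uniq: "y = y'" if yy: "y \<in> Y" "y' \<in> Y" "\<not> pend y" "\<not> pend y'" for y y'
    proof -
      obtain q where q: "E y q" "q \<notin> B" using np yy by blast
      obtain C0 where C0: "C0 = B1 \<or> C0 = B2" "b \<in> C0" "y \<in> C0" using starB[OF yy(1) q] by blast
      obtain q' where q': "E y' q'" "q' \<notin> B" using np yy by blast
      obtain C1 where C1: "C1 = B1 \<or> C1 = B2" "b \<in> C1" "y' \<in> C1" using starB[OF yy(2) q'] by blast
      have y'C0: "y' \<in> C0" using one[OF C0(1) C1(1) C0(2) C1(2)] C1 by blast
      have cb0: "cb C0" using C0(1) b1 b2 bic_cb by blast
      have tr: "E p z" if p: "p \<in> Y" "p' \<in> Y" "p \<in> C0" "p' \<in> C0" "E p' z" for p p' z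
      proof (cases "z = b")
        case True then show ?thesis using bY p(1) by blast
      next
        case False
        then have zB: "z \<notin> B" using indY p(2) p(5) X BXY by blast
        obtain C where C: "C = B1 \<or> C = B2" "b \<in> C" "p' \<in> C" "z \<in> C" using starB[OF p(2) p(5) zB] by blast
        have "C = C0" using one[OF C(1) C0(1) C(2) C0(2)] .
        then have zC: "z \<in> C0" using C by blast
        show ?thesis using cb_xor[OF cb0 C0(2) p(3) zC bY(1)[OF p(1)]] nbq[OF zB] by blast
      qed
      show ?thesis
      proof (rule twin)
        show "y \<in> V" "y' \<in> V" using YV yy by blast+
        fix z show "E y z \<longleftrightarrow> E y' z" using tr[OF yy(1) yy(2) C0(3) y'C0] tr[OF yy(2) yy(1) y'C0 C0(3)] by blast
      qed
    qed
    obtain a c where ac: "a \<in> Y" "c \<in> Y" "pend a" "\<not> pend c"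
    proof (cases "pend ya")
      case True
      then have "\<not> pend yb" using pend_uniq ys by blast
      then show ?thesis using that ys True by blast
    next
      case False
      then have "pend yb" using np_uniq ys by blast
      then show ?thesis using that ys False by blast
    qed
    have acne: "a \<noteq> c" using ac by blast
    have "Y = {a, c}"
    proof
      show "{a, c} \<subseteq> Y" using ac by blast
      show "Y \<subseteq> {a, c}" using pend_uniq np_uniq ac by blast
    qed
    then show ?thesis using concl2I[OF X Nb _ acne] ac(3) unfolding pend_def by blast
  next
    case True
    have s2: "S2 V E B X Y B1 B2 b"
      unfolding S2_def S2_axioms_def using S_self X Nb True by blast
    show ?thesis
    proof (cases "B1 \<inter> Y = B2 \<inter> Y")
      case True
      have inP: "y \<in> B1" if hh2: "y \<in> Y" "\<not> pend y" for y
      proof -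
        obtain q where q: "E y q" "q \<notin> B" using np hh2 by blast
        obtain C where "(C = B1 \<or> C = B2)" "y \<in> C" using starB[OF hh2(1) q] by blast
        then show ?thesis using True hh2(1) by blast
      qed
      have tP: "y = y'" if hh1: "y \<in> Y" "y' \<in> Y" "y \<in> B1" "y' \<in> B1" for y y'
        using typeY[of y y'] hh1 True by blast
      obtain a c where ac: "a \<in> Y" "c \<in> Y" "pend a" "\<not> pend c"
      proof (cases "pend ya")
        case True
        then have "\<not> pend yb" using pend_uniq ys by blast
        then show ?thesis using that ys True by blast
      next
        case False
        then have "pend yb" using tP inP ys by blast
        then show ?thesis using that ys False by blast
      qed
      have acne: "a \<noteq> c" using ac by blast
      have "Y = {a, c}"
      proof
        show "{a, c} \<subseteq> Y" using ac by blast
        show "Y \<subseteq> {a, c}" using pend_uniq tP inP ac by blast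
      qed
      then show ?thesis using concl2I[OF X Nb _ acne] ac(3) unfolding pend_def by blast
    next
      case P12: False
      show ?thesis
      proof (cases "\<exists>y. y \<in> Y \<and> y \<in> B1 \<and> y \<in> B2")
        case False
        then show ?thesis using S2.B2core[OF s2 P12] by blast
      next
        case True
        then obtain y12 where y12: "y12 \<in> Y" "y12 \<in> B1" "y12 \<in> B2" by blast
        define N where "N = insert b ((B1 - B) \<union> (B2 - B))"
        have cbN: "cb ({y12} \<union> N)"
        proof (rule cbI)
          show "independent_set E {y12}" unfolding independent_set_def using Eirr by blast
          show "independent_set E N" unfolding independent_set_def N_def
          proof (intro ballI)
            fix p q assume p: "p \<in> insert b ((B1 - B) \<union> (B2 - B))" and q: "q \<in> insert b ((B1 - B) \<union> (B2 - B))"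
            have pV: "p \<in> V" "q \<in> V" using p q bV b1 b2 bic_V by blast+
            show "\<not> E p q"
            proof (cases "p = b")
              case True
              show ?thesis
              proof (cases "q = b")
                case True then show ?thesis using \<open>p = b\<close> Eirr by blast
              next
                case False then have "q \<notin> B" using q by blast
                then show ?thesis using nbq \<open>p = b\<close> by blast
              qed
            next
              case False
              then have pB: "p \<notin> B" using p by blast
              show ?thesis
              proof (cases "q = b")
                case True then show ?thesis using nbq[OF pB] Esym \<open>q = b\<close> by blast
              next
                case False then have "q \<notin> B" using q by blast
                then show ?thesis using S2.noQQ[OF s2 P12 pV(1) pB pV(2)] by blast
              qed
            qed
          qed
          show "\<forall>x\<in>{y12}. \<forall>y\<in>N. E x y"
            unfolding N_def using bY y12 S2.E1[OF s2] by blast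
        qed (auto simp: N_def)
        have NV: "{y12} \<union> N \<subseteq> V" unfolding N_def using y12 YV bV b1 b2 bic_V by blast
        obtain C where C: "bic C" "{y12} \<union> N \<subseteq> C" using ext[OF cbN NV] by blast
        obtain q1 where q1: "q1 \<in> B1" "q1 \<notin> B"
        proof (rule ccontr)
          assume "\<not> thesis"
          then have "B1 \<subseteq> B" using that by blast
          then show False using bic_subB[OF b1] n1 by blast
        qed
        have "C \<inter> B \<noteq> {}" using C y12 BXY by blast
        then have "C = B \<or> C = B1 \<or> C = B2" using only C(1) by blast
        moreover have "C \<noteq> B" using C q1 unfolding N_def by blast
        ultimately have "C = B1 \<or> C = B2" by blast
        then have "B2 - B \<subseteq> B1 \<or> B1 - B \<subseteq> B2" using C unfolding N_def by blast
        then show ?thesis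
        proof
          assume "B2 - B \<subseteq> B1"
          then show ?thesis using S2.B2core[OF s2 P12] by blast
        next
          assume "B1 - B \<subseteq> B2"
          moreover have "B2 \<inter> Y \<noteq> B1 \<inter> Y" using P12 by blast
          ultimately show ?thesis using S2.B2core[OF S2.swap2[OF s2]] by blast
        qed
      qed
    qed
  qed
qed

end


lemma two_or_one:
  assumes "A \<noteq> {}"
  shows "(\<exists>x. A = {x}) \<or> (\<exists>x1 x2. x1 \<in> A \<and> x2 \<in> A \<and> x1 \<noteq> x2)"
  using assms by blast

theorem lemma4:
  fixes V :: "'a set" and E :: "'a \<Rightarrow> 'a \<Rightarrow> bool" and B :: "'a set"
  assumes "simple_graph V E"
    and "connected_graph V E"
    and "false_twin_free V E"
    and "card V \<ge> 7"
    and "B \<in> KB_vertices V E"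
    and "KB_degree V E B = 2"
  shows "(\<exists>v w x. B = {v, w} \<and> v \<noteq> w \<and> E v w \<and> x \<in> V \<and> x \<noteq> v \<and> x \<noteq> w \<and>
            closed_nbhd V E v = {v, w, x} \<and> closed_nbhd V E w = {v, w, x} \<and>
            independent_set E (nbhd V E x - {v, w}))
       \<or> (\<exists>a b c. B = {a, b, c} \<and> a \<noteq> b \<and> b \<noteq> c \<and> a \<noteq> c \<and>
            E a b \<and> E b c \<and> \<not> E a c \<and>
            nbhd V E a = {b} \<and> nbhd V E b = {a, c})"
proof -
  interpret G V E using assms(1-4) by unfold_locales
  have bB: "bic B" using assms(5) unfolding KB_vertices_def by blast
  obtain X Y where XY: "X \<noteq> {}" "Y \<noteq> {}" "X \<inter> Y = {}" "B = X \<union> Y"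
    "independent_set E X" "independent_set E Y" "\<forall>x\<in>X. \<forall>y\<in>Y. E x y"
    using bic_cb[OF bB] unfolding induces_complete_bipartite_def by blast
  have "card {B'. KB_adj V E B B'} = 2" using assms(6) unfolding KB_degree_def .
  then obtain B1 B2 where B12: "{B'. KB_adj V E B B'} = {B1, B2}" "B1 \<noteq> B2"
    by (auto simp: card_2_iff)
  have adj1: "KB_adj V E B B1" "KB_adj V E B B2" using B12(1) by blast+
  have adjC: "C = B1 \<or> C = B2" if "KB_adj V E B C" for C using B12(1) that by blast
  interpret S V E B X Y B1 B2
  proof unfold_locales
    show "bic B" by (rule bB)
    show "B = X \<union> Y" "X \<noteq> {}" "Y \<noteq> {}" "X \<inter> Y = {}" "independent_set E X" "independent_set E Y"
      "\<forall>x\<in>X. \<forall>y\<in>Y. E x y" using XY by blast+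
    show "bic B1" "bic B2" using adj1 unfolding KB_adj_def KB_vertices_def by blast+
    show "B1 \<noteq> B2" by (rule B12(2))
    show "B1 \<noteq> B" "B2 \<noteq> B" "B1 \<inter> B \<noteq> {}" "B2 \<inter> B \<noteq> {}" using adj1 unfolding KB_adj_def by blast+
    fix C assume C: "bic C" "C \<inter> B \<noteq> {}"
    show "C = B \<or> C = B1 \<or> C = B2"
    proof (cases "C = B")
      case False
      then have "KB_adj V E B C" unfolding KB_adj_def KB_vertices_def using C bB by blast
      then show ?thesis using adjC by blast
    qed blast
  qed
  have sw: "S V E B Y X B1 B2" by (rule swap)
  show ?thesis
  proof (cases "\<exists>x. X = {x}")
    case True
    then obtain b where X: "X = {b}" by blast
    show ?thesis
    proof (cases "\<exists>y. Y = {y}")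
      case True
      then obtain w where "Y = {w}" by blast
      then show ?thesis using caseA[OF X] by blast
    next
      case False
      then obtain ya yb where ys: "ya \<in> Y" "yb \<in> Y" "ya \<noteq> yb" using two_or_one[OF XY(2)] by blast
      show ?thesis
      proof (cases "\<forall>z. E b z \<longrightarrow> z \<in> Y")
        case True
        then show ?thesis using caseB2[OF X ys] by blast
      next
        case False
        then obtain z where z: "E b z" "z \<notin> Y" by blast
        have "z \<notin> B" using z X XY(4) Eirr by blast
        then show ?thesis using caseB1[OF X ys EV2[OF z(1)] _ z(1)] by blast
      qed
    qed
  next
    case False
    then obtain xa xb where xs: "xa \<in> X" "xb \<in> X" "xa \<noteq> xb" using two_or_one[OF XY(1)] by blast
    show ?thesis
    proof (cases "\<exists>y. Y = {y}")
      case True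
      then obtain b where Y: "Y = {b}" by blast
      show ?thesis
      proof (cases "\<forall>z. E b z \<longrightarrow> z \<in> X")
        case True
        then show ?thesis using S.caseB2[OF sw Y xs] by blast
      next
        case False
        then obtain z where z: "E b z" "z \<notin> X" by blast
        have "z \<notin> B" using z Y XY(4) Eirr by blast
        then show ?thesis using S.caseB1[OF sw Y xs EV2[OF z(1)] _ z(1)] by blast
      qed
    next
      case False
      then obtain ya yb where ys: "ya \<in> Y" "yb \<in> Y" "ya \<noteq> yb" using two_or_one[OF XY(2)] by blast
      show ?thesis
      proof (cases "\<exists>u x y. u \<notin> B \<and> x \<in> X \<and> y \<in> Y \<and> E u x \<and> E u y")
        case True
        then obtain u x y where u: "u \<notin> B" "x \<in> X" "y \<in> Y" "E u x" "E u y" by blast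
        then show ?thesis using caseC1[OF xs ys EV1[OF u(4)] u] by blast
      next
        case False
        then show ?thesis using caseC2[OF xs ys] by blast
      qed
    qed
  qed
qed

end
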